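(* Let $H$ be a complex Hilbert space, $\alpha$ a state on $H$ and $A$ an observable on $H$ with outcome space $(\Omega_A,\mathcal{F}_A)$. Let $\mathcal{I}=\mathcal{H}_{(\alpha,A)}$ be the Holevo instrument $\mathcal{H}_{(\alpha,A)}(\Delta)(\rho)=\mathrm{tr}[\rho A(\Delta)]\alpha$. Then $\mathcal{U}_\mathcal{I}=\{\mathcal{I}_a^*\colon a\in\mathcal{E}(H)\}$ is a $Sob$ effect algebra.
   Context: $\mathcal{E}(H)$ is the set of effects ($0\le a\le I$); states are effects of trace one. A sub-observable with outcome space $(\Omega,\mathcal{F})$ is a map $\mathcal{F}\to\mathcal{E}(H)$ countably additive in the strong operator topology; it is an observable if its value at $\Omega$ is $I$; $Sob(H)$ is the set of sub-observables, with pointwise sums and differences. For an instrument $\mathcal{I}$ (operation-valued measure with $\mathcal{I}(\Omega_\mathcal{I})$ trace preserving), the dual $\mathcal{I}^*(\Delta)$ is defined by $\mathrm{tr}[\rho\,\mathcal{I}^*(\Delta)(B)]=\mathrm{tr}[\mathcal{I}(\Delta)(\rho)B]$ for all states $\rho$ and bounded $B$, and $\mathcal{I}_a^*(\Delta)=\mathcal{I}^*(\Delta)(a)$ (for the Holevo instrument, $\mathcal{I}_a^*(\Delta)=\mathrm{tr}(\alpha a)A(\Delta)$). A subset $\mathcal{U}\subseteq Sob(H)$ all of whose elements have the same outcome space is a $Sob$ effect algebra if: (S1) there is an observable $Z\in\mathcal{U}$; (S2) $A\in\mathcal{U}$ implies $Z-A\in\mathcal{U}$; (S3) $A,B\in\mathcal{U}$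 and $A+B\in Sob(H)$ imply $A+B\in\mathcal{U}$. *)

theory Defs
  imports "HOL-Analysis.Analysis"
begin

text \<open>The complex Hilbert space H is modelled as l2(I) for an arbitrary index type 'i
  (every complex Hilbert space is unitarily isomorphic to some l2(I)).
  Operators are maps on such functions, extensional: they vanish outside l2.\<close>

type_synonym 'i vec = "'i \<Rightarrow> complex"
type_synonym 'i op = "'i vec \<Rightarrow> 'i vec"

definition l2 :: "'i vec set" where
  "l2 = {x. (\<lambda>i. (cmod (x i))\<^sup>2) summable_on UNIV}"

definition l2inner :: "'i vec \<Rightarrow> 'i vec \<Rightarrow> complex" where
  "l2inner x y = (\<Sum>\<^sub>\<infinity>i. cnj (x i) * y i)"

definition l2norm :: "'i vec \<Rightarrow> real" where
  "l2norm x = sqrt (\<Sum>\<^sub>\<infinity>i. (cmod (x i))\<^sup>2)"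

definition zero_vec :: "'i vec" where
  "zero_vec = (\<lambda>i. 0)"

definition zero_op :: "'i op" where
  "zero_op = (\<lambda>x. zero_vec)"

definition id_op :: "'i op" where
  "id_op = (\<lambda>x. if x \<in> l2 then x else zero_vec)"

definition bounded_op :: "'i op \<Rightarrow> bool" where
  "bounded_op T \<longleftrightarrow>
     (\<forall>x\<in>l2. T x \<in> l2) \<and>
     (\<forall>x\<in>l2. \<forall>y\<in>l2. \<forall>c. T (\<lambda>i. c * x i + y i) = (\<lambda>i. c * T x i + T y i)) \<and>
     (\<exists>C. \<forall>x\<in>l2. l2norm (T x) \<le> C * l2norm x) \<and>
     (\<forall>x. x \<notin> l2 \<longrightarrow> T x = zero_vec)"

definition positive_op :: "'i op \<Rightarrow> bool" where
  "positive_op T \<longleftrightarrow> bounded_op T \<and>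
     (\<forall>x\<in>l2. Im (l2inner x (T x)) = 0 \<and> 0 \<le> Re (l2inner x (T x)))"

definition effect :: "'i op \<Rightarrow> bool" where
  "effect a \<longleftrightarrow> positive_op a \<and> positive_op (\<lambda>x i. id_op x i - a x i)"

definition basis_vec :: "'i \<Rightarrow> 'i vec" where
  "basis_vec j = (\<lambda>i. if i = j then 1 else 0)"

definition trace_op :: "'i op \<Rightarrow> complex" where
  "trace_op T = (\<Sum>\<^sub>\<infinity>j. l2inner (basis_vec j) (T (basis_vec j)))"

text \<open>States: effects that are trace class (for positive operators: summable diagonal)
  with trace one.\<close>
definition state :: "'i op \<Rightarrow> bool" where
  "state \<rho> \<longleftrightarrow> effect \<rho> \<and>
     (\<lambda>j. l2inner (basis_vec j) (\<rho> (basis_vec j))) summable_on UNIV \<and>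
     trace_op \<rho> = 1"

text \<open>Sub-observables with outcome space (space M, sets M); values outside sets M
  are fixed to 0 (representation convention). Countable additivity in the strong
  operator topology.\<close>
definition subobs :: "'w measure \<Rightarrow> ('w set \<Rightarrow> 'i op) \<Rightarrow> bool" where
  "subobs M A \<longleftrightarrow>
     (\<forall>\<Delta>. \<Delta> \<notin> sets M \<longrightarrow> A \<Delta> = zero_op) \<and>
     (\<forall>\<Delta>\<in>sets M. effect (A \<Delta>)) \<and>
     (\<forall>D :: nat \<Rightarrow> 'w set. range D \<subseteq> sets M \<longrightarrow> disjoint_family D \<longrightarrow>
        (\<forall>x\<in>l2. (\<lambda>N. l2norm (\<lambda>i. (\<Sum>n<N. A (D n) x i) - A (\<Union>n. D n) x i))
                   \<longlonglongrightarrow> 0))"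

definition observable :: "'w measure \<Rightarrow> ('w set \<Rightarrow> 'i op) \<Rightarrow> bool" where
  "observable M A \<longleftrightarrow> subobs M A \<and> A (space M) = id_op"

definition sob_add :: "('w set \<Rightarrow> 'i op) \<Rightarrow> ('w set \<Rightarrow> 'i op) \<Rightarrow> ('w set \<Rightarrow> 'i op)" where
  "sob_add A B = (\<lambda>\<Delta> x i. A \<Delta> x i + B \<Delta> x i)"

definition sob_diff :: "('w set \<Rightarrow> 'i op) \<Rightarrow> ('w set \<Rightarrow> 'i op) \<Rightarrow> ('w set \<Rightarrow> 'i op)" where
  "sob_diff A B = (\<lambda>\<Delta> x i. A \<Delta> x i - B \<Delta> x i)"

definition sob_effect_algebra :: "'w measure \<Rightarrow> ('w set \<Rightarrow> 'i op) set \<Rightarrow> bool" where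
  "sob_effect_algebra M U \<longleftrightarrow>
     U \<subseteq> {A. subobs M A} \<and>
     (\<exists>Z\<in>U. observable M Z \<and> (\<forall>A\<in>U. sob_diff Z A \<in> U)) \<and>
     (\<forall>A\<in>U. \<forall>B\<in>U. subobs M (sob_add A B) \<longrightarrow> sob_add A B \<in> U)"

definition holevo :: "'i op \<Rightarrow> ('w set \<Rightarrow> 'i op) \<Rightarrow> 'w set \<Rightarrow> 'i op \<Rightarrow> 'i op" where
  "holevo \<alpha> A \<Delta> \<rho> = (\<lambda>x i. trace_op (\<rho> \<circ> A \<Delta>) * \<alpha> x i)"

definition dual_inst :: "('w set \<Rightarrow> 'i op \<Rightarrow> 'i op) \<Rightarrow> 'w set \<Rightarrow> 'i op \<Rightarrow> 'i op" where
  "dual_inst I \<Delta> B = (THE X. bounded_op X \<and>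
      (\<forall>\<rho>. state \<rho> \<longrightarrow> trace_op (\<rho> \<circ> X) = trace_op (I \<Delta> \<rho> \<circ> B)))"

definition U_inst :: "('w set \<Rightarrow> 'i op \<Rightarrow> 'i op) \<Rightarrow> ('w set \<Rightarrow> 'i op) set" where
  "U_inst I = {(\<lambda>\<Delta>. dual_inst I \<Delta> a) | a. effect a}"

end

theory Submission
  imports Defs
begin


abbreviation e :: "'i \<Rightarrow> 'i vec" where "e \<equiv> basis_vec"

lemma l2_iff: "x \<in> l2 \<longleftrightarrow> (\<lambda>i. (cmod (x i))\<^sup>2) summable_on UNIV"
  by (simp add: l2_def)

lemma zero_vec_l2[simp]: "zero_vec \<in> l2"
  by (simp add: l2_def zero_vec_def)

lemma finsupp_l2:
  assumes "finite S" "\<And>i. i \<notin> S \<Longrightarrow> x i = 0"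
  shows "x \<in> l2"
  unfolding l2_iff
  by (rule finite_nonzero_values_imp_summable_on, rule finite_subset[OF _ assms(1)]) (use assms(2) in auto)

lemma basis_l2[simp]: "e j \<in> l2"
  by (rule finsupp_l2[of "{j}"]) (auto simp: basis_vec_def)

lemma sq_sum_le: "(p + q)\<^sup>2 \<le> 2*p\<^sup>2 + 2*(q::real)\<^sup>2"
proof -
  have "0 \<le> (p - q)\<^sup>2" by simp
  then show ?thesis by (simp add: power2_eq_square algebra_simps)
qed

lemma l2_lin:
  assumes "x \<in> l2" "y \<in> l2"
  shows "(\<lambda>i. c * x i + y i) \<in> l2"
proof -
  have s: "(\<lambda>i. 2 * (cmod c)\<^sup>2 * (cmod (x i))\<^sup>2 + 2 * (cmod (y i))\<^sup>2) summable_on UNIV"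
    using assms unfolding l2_iff
    by (intro summable_on_add summable_on_cmult_right) auto
  show ?thesis unfolding l2_iff
  proof (rule summable_on_comparison_test[OF s])
    fix i
    have "cmod (c * x i + y i) \<le> cmod c * cmod (x i) + cmod (y i)"
      by (metis norm_mult norm_triangle_ineq)
    moreover have "(cmod c * cmod (x i) + cmod (y i))\<^sup>2 \<le> 2 * (cmod c)\<^sup>2 * (cmod (x i))\<^sup>2 + 2 * (cmod (y i))\<^sup>2"
      using sq_sum_le[of "cmod c * cmod (x i)" "cmod (y i)"] by (simp add: power_mult_distrib)
    ultimately show "(cmod (c * x i + y i))\<^sup>2 \<le> 2 * (cmod c)\<^sup>2 * (cmod (x i))\<^sup>2 + 2 * (cmod (y i))\<^sup>2"
      by (meson norm_ge_zero power_mono order_trans)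
  qed auto
qed

lemma l2_scale: "x \<in> l2 \<Longrightarrow> (\<lambda>i. c * x i) \<in> l2"
  using l2_lin[OF _ zero_vec_l2, of x c] by (simp add: zero_vec_def)

lemma l2_add: "x \<in> l2 \<Longrightarrow> y \<in> l2 \<Longrightarrow> (\<lambda>i. x i + y i) \<in> l2"
  using l2_lin[of x y 1] by simp

lemma l2_diff: "x \<in> l2 \<Longrightarrow> y \<in> l2 \<Longrightarrow> (\<lambda>i. x i - y i) \<in> l2"
  using l2_lin[of y x "-1"] by simp

lemma inner_summable:
  assumes "x \<in> l2" "y \<in> l2"
  shows "(\<lambda>i. cnj (x i) * y i) summable_on UNIV"
proof -
  have s: "(\<lambda>i. (cmod (x i))\<^sup>2 + (cmod (y i))\<^sup>2) summable_on UNIV"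
    using assms unfolding l2_iff by (intro summable_on_add) auto
  have "(\<lambda>i. norm (cnj (x i) * y i)) summable_on UNIV"
  proof (rule Infinite_Sum.abs_summable_on_comparison_test'[OF s])
    fix i show "norm (cnj (x i) * y i) \<le> (cmod (x i))\<^sup>2 + (cmod (y i))\<^sup>2"
    proof -
      have "0 \<le> (cmod (x i) - cmod (y i))\<^sup>2" by simp
      then have "2 * (cmod (x i) * cmod (y i)) \<le> cmod (x i) * cmod (x i) + cmod (y i) * cmod (y i)"
        by (simp add: power2_eq_square algebra_simps)
      moreover have "0 \<le> cmod (x i) * cmod (y i)" by simp
      ultimately show ?thesis unfolding norm_mult complex_mod_cnj power2_eq_square by linarith
    qed
  qed
  then show ?thesis using summable_on_iff_abs_summable_on_complex by blast
qed

lemma inner_cnj: "l2inner y x = cnj (l2inner x y)"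
proof -
  have "cnj (\<Sum>\<^sub>\<infinity>i. cnj (x i) * y i) = (\<Sum>\<^sub>\<infinity>i. cnj (cnj (x i) * y i))"
    by (rule infsum_cnj[symmetric])
  then show ?thesis unfolding l2inner_def by (simp add: mult.commute)
qed

lemma inner_lin_right:
  assumes "x \<in> l2" "y \<in> l2" "z \<in> l2"
  shows "l2inner x (\<lambda>i. c * y i + z i) = c * l2inner x y + l2inner x z"
proof -
  have "l2inner x (\<lambda>i. c * y i + z i) = (\<Sum>\<^sub>\<infinity>i. c * (cnj (x i) * y i) + cnj (x i) * z i)"
    unfolding l2inner_def by (simp add: algebra_simps)
  also have "\<dots> = (\<Sum>\<^sub>\<infinity>i. c * (cnj (x i) * y i)) + (\<Sum>\<^sub>\<infinity>i. cnj (x i) * z i)"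
    using assms by (intro infsum_add summable_on_cmult_right inner_summable) auto
  also have "\<dots> = c * l2inner x y + l2inner x z"
    unfolding l2inner_def by (simp add: infsum_cmult_right')
  finally show ?thesis .
qed

lemma inner_lin_left:
  assumes "x \<in> l2" "y \<in> l2" "z \<in> l2"
  shows "l2inner (\<lambda>i. c * y i + z i) x = cnj c * l2inner y x + l2inner z x"
  using inner_lin_right[OF assms, of c] by (metis inner_cnj complex_cnj_add complex_cnj_mult)

lemma inner_basis_left[simp]: "l2inner (e j) y = y j"
proof -
  have "l2inner (e j) y = (\<Sum>\<^sub>\<infinity>i\<in>{j}. cnj (e j i) * y i)"
    unfolding l2inner_def by (rule infsum_cong_neutral) (auto simp: basis_vec_def)
  then show ?thesis by (simp add: basis_vec_def)
qed

lemma inner_basis_right[simp]: "l2inner y (e j) = cnj (y j)"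
  by (metis inner_basis_left inner_cnj)

lemma inner_finsupp:
  assumes "finite S" "\<And>i. i \<notin> S \<Longrightarrow> v i = 0"
  shows "l2inner v y = (\<Sum>i\<in>S. cnj (v i) * y i)"
proof -
  have "l2inner v y = (\<Sum>\<^sub>\<infinity>i\<in>S. cnj (v i) * y i)"
    unfolding l2inner_def by (rule infsum_cong_neutral) (use assms in auto)
  then show ?thesis using assms by simp
qed

lemma infsum_of_real_c: "(\<Sum>\<^sub>\<infinity>i\<in>A. (of_real (f i) :: complex)) = of_real (\<Sum>\<^sub>\<infinity>i\<in>A. f i)"
proof (cases "f summable_on A")
  case True
  then show ?thesis by (intro infsumI has_sum_of_real has_sum_infsum)
next
  case False
  have "\<not> (\<lambda>i. (of_real (f i) :: complex)) summable_on A"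
  proof
    assume "(\<lambda>i. (of_real (f i) :: complex)) summable_on A"
    then have "(\<lambda>i. Re (of_real (f i) :: complex)) summable_on A" by (rule summable_on_Re)
    then show False using False by simp
  qed
  then show ?thesis using False by (simp add: infsum_not_exists)
qed

lemma inner_self: "l2inner x x = of_real (\<Sum>\<^sub>\<infinity>i. (cmod (x i))\<^sup>2)"
proof -
  have "l2inner x x = (\<Sum>\<^sub>\<infinity>i. of_real ((cmod (x i))\<^sup>2))"
  proof -
    have pt: "\<And>z. cnj z * z = of_real ((cmod z)\<^sup>2)" by (metis complex_norm_square mult.commute)
    show ?thesis unfolding l2inner_def pt ..
  qed
  also have "\<dots> = of_real (\<Sum>\<^sub>\<infinity>i. (cmod (x i))\<^sup>2)"
    by (rule infsum_of_real_c)
  finally show ?thesis .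
qed


lemma l2norm_nonneg[simp]: "0 \<le> l2norm x"
  unfolding l2norm_def by (simp add: infsum_nonneg)

lemma l2norm_sq: "(l2norm x)\<^sup>2 = (\<Sum>\<^sub>\<infinity>i. (cmod (x i))\<^sup>2)"
  unfolding l2norm_def by (simp add: infsum_nonneg)

lemma inner_self_norm: "l2inner x x = of_real ((l2norm x)\<^sup>2)"
  by (simp add: inner_self l2norm_sq)

lemma coord_le_norm:
  assumes "x \<in> l2" shows "cmod (x k) \<le> l2norm x"
proof -
  have "(\<Sum>i\<in>{k}. (cmod (x i))\<^sup>2) \<le> (\<Sum>\<^sub>\<infinity>i. (cmod (x i))\<^sup>2)"
    using assms unfolding l2_iff by (intro finite_sum_le_infsum) auto
  then have "(cmod (x k))\<^sup>2 \<le> (l2norm x)\<^sup>2" by (simp add: l2norm_sq)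
  then show ?thesis by (simp add: abs_le_square_iff[symmetric])
qed

lemma l2norm_scale: "l2norm (\<lambda>i. c * x i) = cmod c * l2norm x"
proof -
  have "(\<Sum>\<^sub>\<infinity>i. (cmod (c * x i))\<^sup>2) = (cmod c)\<^sup>2 * (\<Sum>\<^sub>\<infinity>i. (cmod (x i))\<^sup>2)"
    by (simp add: norm_mult power_mult_distrib infsum_cmult_right')
  then show ?thesis unfolding l2norm_def by (simp add: real_sqrt_mult)
qed

lemma inner_sum_bound:
  assumes "x \<in> l2" "y \<in> l2"
  shows "(\<Sum>\<^sub>\<infinity>i. cmod (x i) * cmod (y i)) \<le> l2norm x * l2norm y"
proof (rule infsum_le_finite_sums)
  have "(\<lambda>i. norm (cnj (x i) * y i)) summable_on UNIV"
    using summable_on_iff_abs_summable_on_complex[THEN iffD1, OF inner_summable[OF assms]] by simp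
  then show "(\<lambda>i. cmod (x i) * cmod (y i)) summable_on UNIV" by (simp add: norm_mult)
next
  fix F :: "'a set" assume F: "finite F"
  have "(\<Sum>i\<in>F. cmod (x i) * cmod (y i)) = (\<Sum>i\<in>F. \<bar>cmod (x i)\<bar> * \<bar>cmod (y i)\<bar>)" by simp
  also have "\<dots> \<le> L2_set (\<lambda>i. cmod (x i)) F * L2_set (\<lambda>i. cmod (y i)) F"
    by (rule L2_set_mult_ineq)
  also have "\<dots> \<le> l2norm x * l2norm y"
  proof (rule mult_mono)
    show "L2_set (\<lambda>i. cmod (x i)) F \<le> l2norm x"
      unfolding L2_set_def l2norm_def using assms(1) F unfolding l2_iff
      by (intro real_sqrt_le_mono finite_sum_le_infsum) auto
    show "L2_set (\<lambda>i. cmod (y i)) F \<le> l2norm y"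
      unfolding L2_set_def l2norm_def using assms(2) F unfolding l2_iff
      by (intro real_sqrt_le_mono finite_sum_le_infsum) auto
  qed (auto simp: L2_set_def intro: sum_nonneg)
  finally show "(\<Sum>i\<in>F. cmod (x i) * cmod (y i)) \<le> l2norm x * l2norm y" .
qed

lemma cauchy_schwarz:
  assumes "x \<in> l2" "y \<in> l2"
  shows "cmod (l2inner x y) \<le> l2norm x * l2norm y"
proof -
  have "(\<lambda>i. norm (cnj (x i) * y i)) summable_on UNIV"
    using summable_on_iff_abs_summable_on_complex[THEN iffD1, OF inner_summable[OF assms]] by simp
  then have "cmod (l2inner x y) \<le> (\<Sum>\<^sub>\<infinity>i. norm (cnj (x i) * y i))"
    unfolding l2inner_def by (rule norm_infsum_bound)
  also have "\<dots> = (\<Sum>\<^sub>\<infinity>i. cmod (x i) * cmod (y i))" by (simp add: norm_mult)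
  also have "\<dots> \<le> l2norm x * l2norm y" by (rule inner_sum_bound[OF assms])
  finally show ?thesis .
qed

lemma minkowski:
  assumes "x \<in> l2" "y \<in> l2"
  shows "l2norm (\<lambda>i. x i + y i) \<le> l2norm x + l2norm y"
proof -
  have s: "(\<lambda>i. x i + y i) \<in> l2" using l2_add[OF assms] .
  have e1: "l2inner (\<lambda>i. x i + y i) z = l2inner x z + l2inner y z" if "z \<in> l2" for z
    using inner_lin_left[OF that assms, of 1] by simp
  have e2: "l2inner z (\<lambda>i. x i + y i) = l2inner z x + l2inner z y" if "z \<in> l2" for z
    using inner_lin_right[OF that assms, of 1] by simp
  have "l2inner (\<lambda>i. x i + y i) (\<lambda>i. x i + y i)
        = l2inner x x + l2inner x y + (l2inner y x + l2inner y y)"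
    unfolding e1[OF s] e2[OF assms(1)] e2[OF assms(2)] ..
  then have "of_real ((l2norm (\<lambda>i. x i + y i))\<^sup>2) = of_real ((l2norm x)\<^sup>2) + l2inner x y + (cnj (l2inner x y) + of_real ((l2norm y)\<^sup>2))"
    by (simp add: inner_self_norm inner_cnj[of y x])
  then have "Re (of_real ((l2norm (\<lambda>i. x i + y i))\<^sup>2)) = Re (of_real ((l2norm x)\<^sup>2) + l2inner x y + (cnj (l2inner x y) + of_real ((l2norm y)\<^sup>2)))"
    by (rule arg_cong)
  then have "(l2norm (\<lambda>i. x i + y i))\<^sup>2 = (l2norm x)\<^sup>2 + 2 * Re (l2inner x y) + (l2norm y)\<^sup>2"
    by simp
  also have "\<dots> \<le> (l2norm x)\<^sup>2 + 2 * (l2norm x * l2norm y) + (l2norm y)\<^sup>2"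
    using cauchy_schwarz[OF assms] complex_Re_le_cmod[of "l2inner x y"] by linarith
  also have "\<dots> = (l2norm x + l2norm y)\<^sup>2" by (simp add: power2_eq_square algebra_simps)
  finally show ?thesis
    by (meson l2norm_nonneg add_nonneg_nonneg power2_le_imp_le)
qed



lemma bounded_l2: "bounded_op T \<Longrightarrow> x \<in> l2 \<Longrightarrow> T x \<in> l2"
  unfolding bounded_op_def by blast

lemma bounded_lin: "bounded_op T \<Longrightarrow> x \<in> l2 \<Longrightarrow> y \<in> l2 \<Longrightarrow>
    T (\<lambda>i. c * x i + y i) = (\<lambda>i. c * T x i + T y i)"
  unfolding bounded_op_def by blast

lemma bounded_out: "bounded_op T \<Longrightarrow> x \<notin> l2 \<Longrightarrow> T x = zero_vec"
  unfolding bounded_op_def by blast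

lemma bounded_zero:
  assumes "bounded_op T" shows "T zero_vec = zero_vec"
proof -
  have h: "T (\<lambda>i. 1 * zero_vec i + zero_vec i) = (\<lambda>i. 1 * T zero_vec i + T zero_vec i)"
    by (rule bounded_lin[OF assms zero_vec_l2 zero_vec_l2])
  have eqz: "(\<lambda>i. 1 * zero_vec i + zero_vec i) = zero_vec" by (simp add: zero_vec_def)
  have "\<forall>i. T zero_vec i = 1 * T zero_vec i + T zero_vec i"
    using fun_cong[OF h[unfolded eqz]] by blast
  then have "\<And>i. T zero_vec i = 0" by (metis add_cancel_left_left mult_1)
  then show ?thesis by (auto simp: zero_vec_def)
qed

lemma bounded_zero': "bounded_op T \<Longrightarrow> T (\<lambda>i. 0) = (\<lambda>i. 0)"
  using bounded_zero unfolding zero_vec_def by blast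

lemma bounded_scale:
  assumes "bounded_op T" "x \<in> l2" shows "T (\<lambda>i. c * x i) = (\<lambda>i. c * T x i)"
  using bounded_lin[OF assms zero_vec_l2, of c] bounded_zero[OF assms(1)] by (simp add: zero_vec_def)

lemma bounded_add:
  assumes "bounded_op T" "x \<in> l2" "y \<in> l2" shows "T (\<lambda>i. x i + y i) = (\<lambda>i. T x i + T y i)"
  using bounded_lin[OF assms, of 1] by simp

lemma bounded_diff:
  assumes "bounded_op T" "x \<in> l2" "y \<in> l2" shows "T (\<lambda>i. x i - y i) = (\<lambda>i. T x i - T y i)"
  using bounded_lin[OF assms(1,3,2), of "-1"] by simp

lemma bounded_bound:
  assumes "bounded_op T" obtains C where "C \<ge> 0" "\<And>x. x \<in> l2 \<Longrightarrow> l2norm (T x) \<le> C * l2norm x"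
proof -
  obtain C where C: "\<forall>x\<in>l2. l2norm (T x) \<le> C * l2norm x" using assms unfolding bounded_op_def by blast
  have "l2norm (T x) \<le> max C 0 * l2norm x" if "x \<in> l2" for x
    using C that by (meson l2norm_nonneg max.cobounded1 mult_right_mono order_trans)
  then show ?thesis using that[of "max C 0"] by auto
qed

lemma bounded_fin:
  assumes "bounded_op T" "finite F" "\<And>k. k \<in> F \<Longrightarrow> u k \<in> l2"
  shows "(\<lambda>i. \<Sum>k\<in>F. c k * u k i) \<in> l2 \<and> T (\<lambda>i. \<Sum>k\<in>F. c k * u k i) = (\<lambda>i. \<Sum>k\<in>F. c k * T (u k) i)"
  using assms(2,3)
proof (induction F rule: finite_induct)
  case empty
  then show ?case using bounded_zero'[OF assms(1)] zero_vec_l2 by (simp add: zero_vec_def)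
next
  case (insert a F)
  then have IH: "(\<lambda>i. \<Sum>k\<in>F. c k * u k i) \<in> l2"
      "T (\<lambda>i. \<Sum>k\<in>F. c k * u k i) = (\<lambda>i. \<Sum>k\<in>F. c k * T (u k) i)" and ua: "u a \<in> l2" by auto
  have eq: "(\<lambda>i. \<Sum>k\<in>insert a F. c k * u k i) = (\<lambda>i. c a * u a i + (\<lambda>i. \<Sum>k\<in>F. c k * u k i) i)"
    using insert(1,2) by simp
  have eq2: "(\<lambda>i. \<Sum>k\<in>insert a F. c k * T (u k) i) = (\<lambda>i. c a * T (u a) i + (\<lambda>i. \<Sum>k\<in>F. c k * T (u k) i) i)"
    using insert(1,2) by simp
  show ?case unfolding eq eq2
  proof
    show "(\<lambda>i. c a * u a i + (\<Sum>k\<in>F. c k * u k i)) \<in> l2" using l2_lin[OF ua IH(1)] by simp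
    show "T (\<lambda>i. c a * u a i + (\<Sum>k\<in>F. c k * u k i)) = (\<lambda>i. c a * T (u a) i + (\<Sum>k\<in>F. c k * T (u k) i))"
      using bounded_lin[OF assms(1) ua IH(1), of "c a"] unfolding IH(2) by simp
  qed
qed

lemma zero_op_bounded: "bounded_op zero_op"
  unfolding bounded_op_def zero_op_def using zero_vec_l2 by (auto simp: zero_vec_def l2norm_def intro!: exI[of _ 0])

lemma id_op_bounded: "bounded_op id_op"
  unfolding bounded_op_def
proof (intro conjI ballI allI impI)
  show "\<exists>C. \<forall>x\<in>l2. l2norm (id_op x) \<le> C * l2norm x"
    by (rule exI[of _ 1]) (simp add: id_op_def)
qed (auto simp: id_op_def l2_lin)

lemma smul_bounded:
  assumes "bounded_op T" shows "bounded_op (\<lambda>x i. c * T x i)"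
proof -
  obtain C where C: "C \<ge> 0" "\<And>x. x \<in> l2 \<Longrightarrow> l2norm (T x) \<le> C * l2norm x"
    using bounded_bound[OF assms] by blast
  have bnd: "l2norm (\<lambda>i. c * T x i) \<le> (cmod c * C) * l2norm x" if "x \<in> l2" for x
  proof -
    have "l2norm (\<lambda>i. c * T x i) = cmod c * l2norm (T x)" by (rule l2norm_scale)
    also have "\<dots> \<le> cmod c * (C * l2norm x)" using C(2)[OF that] by (rule mult_left_mono) simp
    finally show ?thesis by (simp add: mult.assoc)
  qed
  show ?thesis unfolding bounded_op_def
  proof (intro conjI ballI allI impI)
    fix x y :: "'a vec" and d :: complex assume "x \<in> l2" "y \<in> l2"
    then show "(\<lambda>i. c * T (\<lambda>i. d * x i + y i) i) = (\<lambda>i. d * (c * T x i) + c * T y i)"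
    proof -
      have "T (\<lambda>i. d * x i + y i) = (\<lambda>i. d * T x i + T y i)" using bounded_lin[OF assms] \<open>x \<in> l2\<close> \<open>y \<in> l2\<close> by blast
      then show ?thesis by (simp add: algebra_simps)
    qed
  next
    fix x :: "'a vec" assume "x \<in> l2" then show "(\<lambda>i. c * T x i) \<in> l2"
      using bounded_l2[OF assms] by (intro l2_scale)
  next
    fix x :: "'a vec" assume "x \<notin> l2" then show "(\<lambda>i. c * T x i) = zero_vec"
      using bounded_out[OF assms] by (simp add: zero_vec_def)
  next
    show "\<exists>C. \<forall>x\<in>l2. l2norm (\<lambda>i. c * T x i) \<le> C * l2norm x"
      using bnd by (intro exI[of _ "cmod c * C"]) blast
  qed
qed

lemma sub_bounded:
  assumes "bounded_op S" "bounded_op T" shows "bounded_op (\<lambda>x i. S x i - T x i)"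
proof -
  obtain C where C: "C \<ge> 0" "\<And>x. x \<in> l2 \<Longrightarrow> l2norm (S x) \<le> C * l2norm x"
    using bounded_bound[OF assms(1)] by blast
  obtain D where D: "D \<ge> 0" "\<And>x. x \<in> l2 \<Longrightarrow> l2norm (T x) \<le> D * l2norm x"
    using bounded_bound[OF assms(2)] by blast
  have bnd: "l2norm (\<lambda>i. S x i - T x i) \<le> (C + D) * l2norm x" if x: "x \<in> l2" for x
  proof -
    have "l2norm (\<lambda>i. S x i + (-1) * T x i) \<le> l2norm (S x) + l2norm (\<lambda>i. (-1) * T x i)"
      using x bounded_l2[OF assms(1) x] bounded_l2[OF assms(2) x] by (intro minkowski l2_scale)
    also have "\<dots> \<le> C * l2norm x + D * l2norm x"
    proof -
      have "l2norm (\<lambda>i. (-1) * T x i) = l2norm (T x)" using l2norm_scale[of "-1" "T x"] by simp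
      then show ?thesis using C(2)[OF x] D(2)[OF x] by linarith
    qed
    finally show ?thesis by (simp add: algebra_simps)
  qed
  show ?thesis unfolding bounded_op_def
  proof (intro conjI ballI allI impI)
    fix x y :: "'a vec" and d :: complex assume "x \<in> l2" "y \<in> l2"
    then show "(\<lambda>i. S (\<lambda>i. d * x i + y i) i - T (\<lambda>i. d * x i + y i) i) = (\<lambda>i. d * (S x i - T x i) + (S y i - T y i))"
    proof -
      have "S (\<lambda>i. d * x i + y i) = (\<lambda>i. d * S x i + S y i)" using bounded_lin[OF assms(1)] \<open>x \<in> l2\<close> \<open>y \<in> l2\<close> by blast
      moreover have "T (\<lambda>i. d * x i + y i) = (\<lambda>i. d * T x i + T y i)" using bounded_lin[OF assms(2)] \<open>x \<in> l2\<close> \<open>y \<in> l2\<close> by blast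
      ultimately show ?thesis by (simp add: algebra_simps)
    qed
  next
    fix x :: "'a vec" assume "x \<in> l2" then show "(\<lambda>i. S x i - T x i) \<in> l2"
      using bounded_l2[OF assms(1)] bounded_l2[OF assms(2)] by (intro l2_diff)
  next
    fix x :: "'a vec" assume "x \<notin> l2" then show "(\<lambda>i. S x i - T x i) = zero_vec"
      using bounded_out[OF assms(1)] bounded_out[OF assms(2)] by (simp add: zero_vec_def)
  next
    show "\<exists>C. \<forall>x\<in>l2. l2norm (\<lambda>i. S x i - T x i) \<le> C * l2norm x"
      using bnd by (intro exI[of _ "C + D"]) blast
  qed
qed


lemma inner_scale_right: "l2inner x (\<lambda>i. c * y i) = c * l2inner x y"
  unfolding l2inner_def by (simp add: infsum_cmult_right' algebra_simps)

lemma polarization: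
  fixes B :: "'i vec \<Rightarrow> 'i vec \<Rightarrow> complex" and V :: "'i vec set"
  assumes cl: "\<And>c u z. u \<in> V \<Longrightarrow> z \<in> V \<Longrightarrow> (\<lambda>i. c * u i + z i) \<in> V"
    and r: "\<And>u x z c. u \<in> V \<Longrightarrow> x \<in> V \<Longrightarrow> z \<in> V \<Longrightarrow> B u (\<lambda>i. c * x i + z i) = c * B u x + B u z"
    and l: "\<And>u x z c. u \<in> V \<Longrightarrow> x \<in> V \<Longrightarrow> z \<in> V \<Longrightarrow> B (\<lambda>i. c * u i + z i) x = cnj c * B u x + B z x"
    and d: "\<And>y. y \<in> V \<Longrightarrow> B y y = 0"
    and w: "w \<in> V" and x: "x \<in> V"
  shows "B w x = 0"
proof -
  define p where "p = (\<lambda>i. 1 * w i + x i)"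
  define q where "q = (\<lambda>i. \<i> * x i + w i)"
  have pV: "p \<in> V" unfolding p_def by (rule cl[OF w x])
  have qV: "q \<in> V" unfolding q_def by (rule cl[OF x w])
  have a1: "B p p = cnj 1 * B w p + B x p" using l[OF w pV x, of 1] unfolding p_def[symmetric] .
  have a2: "B w p = 1 * B w w + B w x" using r[OF w w x, of 1] unfolding p_def[symmetric] .
  have a3: "B x p = 1 * B x w + B x x" using r[OF x w x, of 1] unfolding p_def[symmetric] .
  have 1: "B w x + B x w = 0" using a1 a2 a3 d[OF w] d[OF x] d[OF pV] by simp
  have b1: "B q q = cnj \<i> * B x q + B w q" using l[OF x qV w, of \<i>] unfolding q_def[symmetric] .
  have b2: "B x q = \<i> * B x x + B x w" using r[OF x x w, of \<i>] unfolding q_def[symmetric] .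
  have b3: "B w q = \<i> * B w x + B w w" using r[OF w x w, of \<i>] unfolding q_def[symmetric] .
  have 2: "\<i> * B w x - \<i> * B x w = 0" using b1 b2 b3 d[OF w] d[OF x] d[OF qV] by (simp add: algebra_simps)
  then have "B w x = B x w" by (simp add: right_diff_distrib[symmetric])
  then show ?thesis using 1 by simp
qed

lemma positive_bounded: "positive_op T \<Longrightarrow> bounded_op T"
  unfolding positive_op_def by blast

lemma positive_inner: "positive_op T \<Longrightarrow> x \<in> l2 \<Longrightarrow> Im (l2inner x (T x)) = 0 \<and> 0 \<le> Re (l2inner x (T x))"
  unfolding positive_op_def by blast

lemma pos_selfadj:
  fixes T :: "'i op" and w x :: "'i vec"
  assumes T: "positive_op T" and w: "w \<in> l2" and x: "x \<in> l2"
  shows "l2inner w (T x) = l2inner (T w) x"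
proof -
  have bT: "bounded_op T" using positive_bounded[OF T] .
  define B :: "'i vec \<Rightarrow> 'i vec \<Rightarrow> complex" where "B = (\<lambda>u y. l2inner u (T y) - l2inner (T u) y)"
  have "B w x = 0"
  proof (rule polarization[of l2 B])
    fix c and u z :: "'i vec" assume "u \<in> l2" "z \<in> l2" then show "(\<lambda>i. c * u i + z i) \<in> l2" by (rule l2_lin)
  next
    fix u y z :: "'i vec" and c assume h: "u \<in> l2" "y \<in> l2" "z \<in> l2"
    have Tl: "T y \<in> l2" "T z \<in> l2" "T u \<in> l2" using bounded_l2[OF bT] h by auto
    show "B u (\<lambda>i. c * y i + z i) = c * B u y + B u z"
      unfolding B_def bounded_lin[OF bT h(2,3)] inner_lin_right[OF h(1) Tl(1,2)] inner_lin_right[OF Tl(3) h(2,3)]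
      by (simp add: algebra_simps)
  next
    fix u y z :: "'i vec" and c assume h: "u \<in> l2" "y \<in> l2" "z \<in> l2"
    have Tl: "T y \<in> l2" "T z \<in> l2" "T u \<in> l2" using bounded_l2[OF bT] h by auto
    show "B (\<lambda>i. c * u i + z i) y = cnj c * B u y + B z y"
      unfolding B_def bounded_lin[OF bT h(1,3)] inner_lin_left[OF Tl(1) h(1,3)] inner_lin_left[OF h(2) Tl(3,2)]
      by (simp add: algebra_simps)
  next
    fix y :: "'i vec" assume y: "y \<in> l2"
    have "Im (l2inner y (T y)) = 0" using positive_inner[OF T y] by blast
    then have "cnj (l2inner y (T y)) = l2inner y (T y)" by (simp add: complex_eq_iff)
    then show "B y y = 0" unfolding B_def by (metis inner_cnj right_minus_eq)
  qed (use w x in auto)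
  then show ?thesis unfolding B_def by simp
qed

lemma effect_pos: "effect a \<Longrightarrow> positive_op a"
  unfolding effect_def by blast

lemma effect_bounded: "effect a \<Longrightarrow> bounded_op a"
  unfolding effect_def positive_op_def by blast

lemma effect_le:
  assumes a: "effect a" and x: "x \<in> l2"
  shows "Re (l2inner x (a x)) \<le> (l2norm x)\<^sup>2"
proof -
  have p: "positive_op (\<lambda>x i. id_op x i - a x i)" using a unfolding effect_def by blast
  have ax: "a x \<in> l2" using bounded_l2[OF effect_bounded[OF a] x] .
  have eq: "(\<lambda>i. id_op x i - a x i) = (\<lambda>i. (-1) * a x i + x i)" using x by (simp add: id_op_def)
  have "0 \<le> Re (l2inner x (\<lambda>i. id_op x i - a x i))" using positive_inner[OF p x] by simp
  also have "l2inner x (\<lambda>i. id_op x i - a x i) = - l2inner x (a x) + l2inner x x"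
    unfolding eq inner_lin_right[OF x ax x] by simp
  finally show ?thesis by (simp add: inner_self_norm)
qed

lemma effect_smul:
  assumes a: "effect a" and r: "0 \<le> r" "r \<le> 1"
  shows "effect (\<lambda>x i. of_real r * a x i)"
proof -
  have ba: "bounded_op a" using effect_bounded[OF a] .
  have b1: "bounded_op (\<lambda>x i. of_real r * a x i)" by (rule smul_bounded[OF ba])
  have b2: "bounded_op (\<lambda>x i. id_op x i - of_real r * a x i)"
    using sub_bounded[OF id_op_bounded b1] by simp
  show ?thesis unfolding effect_def positive_op_def
  proof (intro conjI ballI b1 b2)
    fix x :: "'a vec" assume x: "x \<in> l2"
    have "Im (l2inner x (a x)) = 0 \<and> 0 \<le> Re (l2inner x (a x))" using positive_inner[OF effect_pos[OF a] x] .
    then show "Im (l2inner x (\<lambda>i. of_real r * a x i)) = 0" "0 \<le> Re (l2inner x (\<lambda>i. of_real r * a x i))"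
      using r by (auto simp: inner_scale_right)
  next
    fix x :: "'a vec" assume x: "x \<in> l2"
    have ax: "a x \<in> l2" using bounded_l2[OF ba x] .
    have pos: "Im (l2inner x (a x)) = 0 \<and> 0 \<le> Re (l2inner x (a x))" using positive_inner[OF effect_pos[OF a] x] .
    have le: "Re (l2inner x (a x)) \<le> (l2norm x)\<^sup>2" using effect_le[OF a x] .
    have eq: "(\<lambda>i. id_op x i - of_real r * a x i) = (\<lambda>i. (- of_real r) * a x i + x i)" using x by (simp add: id_op_def)
    have v: "l2inner x (\<lambda>i. id_op x i - of_real r * a x i) = - of_real r * l2inner x (a x) + of_real ((l2norm x)\<^sup>2)"
      unfolding eq inner_lin_right[OF x ax x] inner_self_norm ..
    have "r * Re (l2inner x (a x)) \<le> Re (l2inner x (a x))"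
      using pos r by (simp add: mult_left_le_one_le)
    then show "Im (l2inner x (\<lambda>i. id_op x i - of_real r * a x i)) = 0"
      "0 \<le> Re (l2inner x (\<lambda>i. id_op x i - of_real r * a x i))"
      unfolding v using pos le by auto
  qed
qed

lemma effect_id: "effect id_op"
  unfolding effect_def positive_op_def
proof (intro conjI ballI id_op_bounded)
  show "bounded_op (\<lambda>x i. id_op x i - id_op x i)" using sub_bounded[OF id_op_bounded id_op_bounded] .
next
  fix x :: "'a vec" assume x: "x \<in> l2"
  show "Im (l2inner x (id_op x)) = 0" "0 \<le> Re (l2inner x (id_op x))"
    using x by (auto simp: id_op_def inner_self_norm)
  show "Im (l2inner x (\<lambda>i. id_op x i - id_op x i)) = 0" "0 \<le> Re (l2inner x (\<lambda>i. id_op x i - id_op x i))"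
    by (auto simp: l2inner_def)
qed

lemma effect_scalar:
  assumes "0 \<le> r" "r \<le> 1" shows "effect (\<lambda>x i. of_real r * id_op x i)"
  using effect_smul[OF effect_id assms] .

lemma effect_scalar_inv:
  assumes "effect (\<lambda>(x::'i vec) i. c * id_op x i)"
  shows "Im c = 0 \<and> 0 \<le> Re c \<and> Re c \<le> 1"
proof -
  define j :: 'i where "j = undefined"
  have 1: "Im (l2inner (e j) (\<lambda>i. c * id_op (e j) i)) = 0 \<and> 0 \<le> Re (l2inner (e j) (\<lambda>i. c * id_op (e j) i))"
    using positive_inner[OF effect_pos[OF assms] basis_l2[of j]] by simp
  have "positive_op (\<lambda>(x::'i vec) i. id_op x i - c * id_op x i)" using assms unfolding effect_def by (rule conjunct2)
  from positive_inner[OF this basis_l2[of j]]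
  have 2: "0 \<le> Re (l2inner (e j) (\<lambda>i. id_op (e j) i - c * id_op (e j) i))" by blast
  have idj: "id_op (e j) = e j" by (simp add: id_op_def)
  have ejj: "e j j = 1" by (simp add: basis_vec_def)
  show ?thesis using 1 2 by (simp add: idj ejj)
qed


lemma inner_scale_left: "l2inner (\<lambda>i. c * x i) y = cnj c * l2inner x y"
  unfolding l2inner_def by (simp add: infsum_cmult_right' algebra_simps)

definition finsupp :: "'i vec \<Rightarrow> bool" where
  "finsupp v \<longleftrightarrow> (\<exists>S. finite S \<and> (\<forall>i. i \<notin> S \<longrightarrow> v i = 0))"

lemma finsupp_l2': "finsupp v \<Longrightarrow> v \<in> l2"
  unfolding finsupp_def using finsupp_l2 by blast

lemma finsupp_lin: "finsupp u \<Longrightarrow> finsupp z \<Longrightarrow> finsupp (\<lambda>i. c * u i + z i)"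
proof -
  assume "finsupp u" "finsupp z"
  then obtain S1 S2 where "finite S1" "\<forall>i. i \<notin> S1 \<longrightarrow> u i = 0" "finite S2" "\<forall>i. i \<notin> S2 \<longrightarrow> z i = 0"
    unfolding finsupp_def by blast
  then show ?thesis unfolding finsupp_def by (intro exI[of _ "S1 \<union> S2"]) auto
qed

lemma finsupp_basis: "finsupp (e j)"
  unfolding finsupp_def by (intro exI[of _ "{j}"]) (auto simp: basis_vec_def)

lemma finsupp_expand:
  assumes "finite S" "\<And>i. i \<notin> S \<Longrightarrow> v i = 0"
  shows "v = (\<lambda>i. \<Sum>j\<in>S. v j * e j i)"
proof
  fix i
  have "(\<Sum>j\<in>S. v j * e j i) = (\<Sum>j\<in>S. if j = i then v j else 0)"
    by (rule sum.cong) (auto simp: basis_vec_def)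
  also have "\<dots> = v i" using assms by (auto simp: sum.delta)
  finally show "v i = (\<Sum>j\<in>S. v j * e j i)" by simp
qed

definition rk1 :: "'i vec \<Rightarrow> 'i op" where
  "rk1 v = (\<lambda>x. if x \<in> l2 then (\<lambda>i. l2inner v x * v i) else zero_vec)"

lemma rk1_bounded:
  assumes v: "v \<in> l2"
  shows "bounded_op (rk1 v)"
  unfolding bounded_op_def
proof (intro conjI ballI allI impI)
  fix x :: "'a vec" assume "x \<in> l2" then show "rk1 v x \<in> l2" using v by (simp add: rk1_def l2_scale)
next
  fix x y :: "'a vec" and c assume x: "x \<in> l2" and y: "y \<in> l2"
  show "rk1 v (\<lambda>i. c * x i + y i) = (\<lambda>i. c * rk1 v x i + rk1 v y i)"
  proof -
    have m: "(\<lambda>i. c * x i + y i) \<in> l2" using l2_lin[OF x y] .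
    show ?thesis by (simp add: rk1_def m x y inner_lin_right[OF v x y]) (simp add: algebra_simps)
  qed
next
  fix x :: "'a vec" assume "x \<notin> l2" then show "rk1 v x = zero_vec" by (simp add: rk1_def)
next
  show "\<exists>C. \<forall>x\<in>l2. l2norm (rk1 v x) \<le> C * l2norm x"
  proof (intro exI[of _ "l2norm v * l2norm v"] ballI)
    fix x :: "'a vec" assume x: "x \<in> l2"
    have "l2norm (rk1 v x) = cmod (l2inner v x) * l2norm v" using x by (simp add: rk1_def l2norm_scale)
    also have "\<dots> \<le> (l2norm v * l2norm x) * l2norm v"
      by (rule mult_right_mono[OF cauchy_schwarz[OF v x]]) simp
    finally show "l2norm (rk1 v x) \<le> l2norm v * l2norm v * l2norm x" by (simp add: algebra_simps)
  qed
qed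

lemma cnj_mult_self: "z * cnj z = of_real ((cmod z)\<^sup>2)"
  by (rule complex_norm_square[symmetric])

lemma rk1_state:
  assumes S: "finite S" "\<And>i. i \<notin> S \<Longrightarrow> v i = 0" and n: "l2inner v v = 1"
  shows "state (rk1 v)"
proof -
  have v: "v \<in> l2" using finsupp_l2[OF S] .
  have "of_real ((l2norm v)\<^sup>2) = (1::complex)" using n by (simp add: inner_self_norm)
  then have "(l2norm v)\<^sup>2 = 1" by (simp only: of_real_eq_1_iff)
  then have nv: "l2norm v = 1" using l2norm_nonneg[of v] by (simp add: power2_eq_1_iff)
  have b: "bounded_op (rk1 v)" using rk1_bounded[OF v] .
  have pos: "positive_op (rk1 v)" unfolding positive_op_def
  proof (intro conjI ballI b)
    fix x :: "'a vec" assume x: "x \<in> l2"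
    have "l2inner x (rk1 v x) = l2inner v x * l2inner x v" using x by (simp add: rk1_def inner_scale_right)
    also have "\<dots> = of_real ((cmod (l2inner v x))\<^sup>2)" unfolding inner_cnj[of x v] cnj_mult_self ..
    finally show "Im (l2inner x (rk1 v x)) = 0" "0 \<le> Re (l2inner x (rk1 v x))" by simp_all
  qed
  have pos2: "positive_op (\<lambda>x i. id_op x i - rk1 v x i)" unfolding positive_op_def
  proof (intro conjI ballI sub_bounded[OF id_op_bounded b])
    fix x :: "'a vec" assume x: "x \<in> l2"
    have eq: "(\<lambda>i. id_op x i - rk1 v x i) = (\<lambda>i. (- l2inner v x) * v i + x i)"
      using x by (simp add: id_op_def rk1_def)
    have "l2inner x (\<lambda>i. id_op x i - rk1 v x i) = - (l2inner v x * l2inner x v) + l2inner x x"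
      unfolding eq inner_lin_right[OF x v x] by simp
    also have "\<dots> = of_real ((l2norm x)\<^sup>2 - (cmod (l2inner v x))\<^sup>2)"
      unfolding inner_cnj[of x v] cnj_mult_self inner_self_norm by simp
    finally have eq2: "l2inner x (\<lambda>i. id_op x i - rk1 v x i) = of_real ((l2norm x)\<^sup>2 - (cmod (l2inner v x))\<^sup>2)" .
    have "cmod (l2inner v x) \<le> l2norm x" using cauchy_schwarz[OF v x] nv by simp
    then have "(cmod (l2inner v x))\<^sup>2 \<le> (l2norm x)\<^sup>2" by (simp add: power_mono)
    then show "Im (l2inner x (\<lambda>i. id_op x i - rk1 v x i)) = 0"
      "0 \<le> Re (l2inner x (\<lambda>i. id_op x i - rk1 v x i))" unfolding eq2 by simp_all
  qed
  have diag: "l2inner (e j) (rk1 v (e j)) = cnj (v j) * v j" for j by (simp add: rk1_def)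
  have sm: "(\<lambda>j. l2inner (e j) (rk1 v (e j))) summable_on UNIV"
    unfolding diag by (rule finite_nonzero_values_imp_summable_on, rule finite_subset[OF _ S(1)]) (use S(2) in auto)
  have tr: "trace_op (rk1 v) = 1" unfolding trace_op_def diag using n by (simp add: l2inner_def)
  show ?thesis unfolding state_def effect_def using pos pos2 sm tr by blast
qed

lemma rk1_trace:
  assumes S: "finite S" "\<And>i. i \<notin> S \<Longrightarrow> v i = 0" and T: "bounded_op T"
  shows "trace_op (rk1 v \<circ> T) = l2inner v (T v)"
proof -
  have "trace_op (rk1 v \<circ> T) = (\<Sum>\<^sub>\<infinity>j. l2inner v (T (e j)) * v j)"
    unfolding trace_op_def using bounded_l2[OF T basis_l2] by (simp add: rk1_def)
  also have "\<dots> = (\<Sum>\<^sub>\<infinity>j\<in>S. l2inner v (T (e j)) * v j)"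
    by (rule infsum_cong_neutral) (use S in auto)
  also have "\<dots> = (\<Sum>j\<in>S. l2inner v (T (e j)) * v j)" using S by simp
  also have "\<dots> = (\<Sum>j\<in>S. \<Sum>i\<in>S. cnj (v i) * T (e j) i * v j)"
    by (simp add: inner_finsupp[OF S] sum_distrib_right)
  also have "\<dots> = (\<Sum>i\<in>S. \<Sum>j\<in>S. cnj (v i) * T (e j) i * v j)" by (rule sum.swap)
  also have "\<dots> = (\<Sum>i\<in>S. cnj (v i) * (\<Sum>j\<in>S. v j * T (e j) i))"
    by (simp add: sum_distrib_left mult_ac)
  also have "\<dots> = l2inner v (\<lambda>i. \<Sum>j\<in>S. v j * T (e j) i)" using inner_finsupp[OF S] by simp
  also have "(\<lambda>i. \<Sum>j\<in>S. v j * T (e j) i) = T v"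
    using bounded_fin[OF T S(1), of e v] finsupp_expand[OF S] by simp
  finally show ?thesis .
qed

lemma finsupp_quad_eq:
  assumes X: "bounded_op X" and Y: "bounded_op Y"
    and tr: "\<And>\<rho>. state \<rho> \<Longrightarrow> trace_op (\<rho> \<circ> X) = trace_op (\<rho> \<circ> Y)"
    and v: "finsupp v"
  shows "l2inner v (X v) = l2inner v (Y v)"
proof -
  obtain S where S: "finite S" "\<And>i. i \<notin> S \<Longrightarrow> v i = 0" using v unfolding finsupp_def by blast
  have vl: "v \<in> l2" using finsupp_l2[OF S] .
  show ?thesis
  proof (cases "l2norm v = 0")
    case True
    have "v = (\<lambda>i. 0)"
    proof
      fix i show "v i = 0" using coord_le_norm[OF vl, of i] True by simp
    qed
    then show ?thesis by (simp add: l2inner_def)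
  next
    case False
    then have np: "l2norm v > 0" using l2norm_nonneg[of v] by linarith
    define c :: complex where "c = of_real (1 / l2norm v)"
    define u where "u = (\<lambda>i. c * v i)"
    have uS: "\<And>i. i \<notin> S \<Longrightarrow> u i = 0" using S(2) by (simp add: u_def)
    have cc: "cnj c * c * of_real ((l2norm v)\<^sup>2) = 1" using np
      by (simp add: c_def power2_eq_square field_simps)
    have "l2inner u u = 1" unfolding u_def inner_scale_left inner_scale_right inner_self_norm
      using cc by (simp add: algebra_simps)
    then have st: "state (rk1 u)" using rk1_state[OF S(1) uS] by simp
    have "l2inner u (X u) = l2inner u (Y u)"
      using tr[OF st] rk1_trace[OF S(1) uS X] rk1_trace[OF S(1) uS Y] by simp
    then have "cnj c * (c * l2inner v (X v)) = cnj c * (c * l2inner v (Y v))"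
      unfolding u_def bounded_scale[OF X vl] bounded_scale[OF Y vl] inner_scale_left inner_scale_right .
    moreover have "c \<noteq> 0" using np by (simp add: c_def)
    ultimately show ?thesis by simp
  qed
qed

lemma sep_basis:
  assumes X: "bounded_op X" and Y: "bounded_op Y"
    and tr: "\<And>\<rho>. state \<rho> \<Longrightarrow> trace_op (\<rho> \<circ> X) = trace_op (\<rho> \<circ> Y)"
  shows "X (e l) = Y (e l)"
proof
  fix k
  define B where "B = (\<lambda>u w. l2inner u (X w) - l2inner u (Y w))"
  have "B (e k) (e l) = 0"
  proof (rule polarization[of "Collect finsupp" B])
    fix c and u z :: "'a vec" assume "u \<in> Collect finsupp" "z \<in> Collect finsupp"
    then show "(\<lambda>i. c * u i + z i) \<in> Collect finsupp" by (simp add: finsupp_lin)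
  next
    fix u y z :: "'a vec" and c assume h: "u \<in> Collect finsupp" "y \<in> Collect finsupp" "z \<in> Collect finsupp"
    then have l: "u \<in> l2" "y \<in> l2" "z \<in> l2" by (auto intro: finsupp_l2')
    have Tl: "X y \<in> l2" "X z \<in> l2" "Y y \<in> l2" "Y z \<in> l2" using bounded_l2[OF X] bounded_l2[OF Y] l by auto
    show "B u (\<lambda>i. c * y i + z i) = c * B u y + B u z"
      unfolding B_def bounded_lin[OF X l(2,3)] bounded_lin[OF Y l(2,3)]
        inner_lin_right[OF l(1) Tl(1,2)] inner_lin_right[OF l(1) Tl(3,4)]
      by (simp add: algebra_simps)
  next
    fix u y z :: "'a vec" and c assume h: "u \<in> Collect finsupp" "y \<in> Collect finsupp" "z \<in> Collect finsupp"
    then have l: "u \<in> l2" "y \<in> l2" "z \<in> l2" by (auto intro: finsupp_l2')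
    have Tl: "X y \<in> l2" "Y y \<in> l2" using bounded_l2[OF X] bounded_l2[OF Y] l by auto
    show "B (\<lambda>i. c * u i + z i) y = cnj c * B u y + B z y"
      unfolding B_def inner_lin_left[OF Tl(1) l(1,3)] inner_lin_left[OF Tl(2) l(1,3)]
      by (simp add: algebra_simps)
  next
    fix y :: "'a vec" assume "y \<in> Collect finsupp"
    then show "B y y = 0" unfolding B_def using finsupp_quad_eq[OF X Y tr] by simp
  qed (auto simp: finsupp_basis)
  then show "X (e l) k = Y (e l) k" unfolding B_def by simp
qed

lemma sep_ops:
  assumes X: "bounded_op X" and Y: "bounded_op Y"
    and tr: "\<And>\<rho>. state \<rho> \<Longrightarrow> trace_op (\<rho> \<circ> X) = trace_op (\<rho> \<circ> Y)"
  shows "X = Y"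
proof
  fix x :: "'a vec"
  show "X x = Y x"
  proof (cases "x \<in> l2")
    case False
    then show ?thesis using bounded_out[OF X] bounded_out[OF Y] by simp
  next
    case x: True
    obtain CX where CX: "CX \<ge> 0" "\<And>x. x \<in> l2 \<Longrightarrow> l2norm (X x) \<le> CX * l2norm x"
      using bounded_bound[OF X] by blast
    obtain CY where CY: "CY \<ge> 0" "\<And>x. x \<in> l2 \<Longrightarrow> l2norm (Y x) \<le> CY * l2norm x"
      using bounded_bound[OF Y] by blast
    have eb: "X (e l) = Y (e l)" for l using sep_basis[OF X Y tr] .
    have key: "cmod (X x k - Y x k) \<le> (CX + CY) * sqrt \<epsilon>" if eps: "\<epsilon> > 0" for k \<epsilon>
    proof -
      have hs: "((\<lambda>i. (cmod (x i))\<^sup>2) has_sum (\<Sum>\<^sub>\<infinity>i. (cmod (x i))\<^sup>2)) UNIV"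
        using x unfolding l2_iff by (rule has_sum_infsum)
      obtain F where F: "finite F" "dist (\<Sum>i\<in>F. (cmod (x i))\<^sup>2) (\<Sum>\<^sub>\<infinity>i. (cmod (x i))\<^sup>2) \<le> \<epsilon>"
        using has_sum_finite_approximation[OF hs eps] by blast
      define xF where "xF = (\<lambda>i. if i \<in> F then x i else 0)"
      have xFS: "\<And>i. i \<notin> F \<Longrightarrow> xF i = 0" by (simp add: xF_def)
      have xFl: "xF \<in> l2" using finsupp_l2[OF F(1) xFS] .
      define z where "z = (\<lambda>i. x i - xF i)"
      have zl: "z \<in> l2" unfolding z_def using l2_diff[OF x xFl] .
      have XF: "X xF = Y xF"
      proof -
        have "X xF = (\<lambda>i. \<Sum>j\<in>F. xF j * X (e j) i)"
          using bounded_fin[OF X F(1), of e xF] finsupp_expand[OF F(1) xFS] by simp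
        also have "\<dots> = (\<lambda>i. \<Sum>j\<in>F. xF j * Y (e j) i)" using eb by simp
        also have "\<dots> = Y xF"
          using bounded_fin[OF Y F(1), of e xF] finsupp_expand[OF F(1) xFS] by simp
        finally show ?thesis .
      qed
      have XZ: "X z = (\<lambda>i. X x i - X xF i)" unfolding z_def by (rule bounded_diff[OF X x xFl])
      have YZ: "Y z = (\<lambda>i. Y x i - Y xF i)" unfolding z_def by (rule bounded_diff[OF Y x xFl])
      have diff: "X x k - Y x k = X z k - Y z k" using XZ YZ XF by simp
      have split: "(\<Sum>\<^sub>\<infinity>i. (cmod (x i))\<^sup>2) = (\<Sum>\<^sub>\<infinity>i. (cmod (z i))\<^sup>2) + (\<Sum>i\<in>F. (cmod (x i))\<^sup>2)"
      proof -
        have "(\<Sum>\<^sub>\<infinity>i. (cmod (x i))\<^sup>2) = (\<Sum>\<^sub>\<infinity>i. (cmod (z i))\<^sup>2 + (cmod (xF i))\<^sup>2)"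
          by (rule infsum_cong) (simp add: z_def xF_def)
        also have "\<dots> = (\<Sum>\<^sub>\<infinity>i. (cmod (z i))\<^sup>2) + (\<Sum>\<^sub>\<infinity>i. (cmod (xF i))\<^sup>2)"
          using zl xFl unfolding l2_iff by (rule infsum_add)
        also have "(\<Sum>\<^sub>\<infinity>i. (cmod (xF i))\<^sup>2) = (\<Sum>\<^sub>\<infinity>i\<in>F. (cmod (x i))\<^sup>2)"
          by (rule infsum_cong_neutral) (auto simp: xF_def)
        finally show ?thesis using F(1) by simp
      qed
      have "(l2norm z)\<^sup>2 \<le> \<epsilon>" using F(2) split unfolding l2norm_sq dist_real_def by simp
      then have nz: "l2norm z \<le> sqrt \<epsilon>" using l2norm_nonneg by (simp add: real_le_rsqrt)
      have "cmod (X z k - Y z k) \<le> cmod (X z k) + cmod (Y z k)" by (rule norm_triangle_ineq4)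
      also have "\<dots> \<le> l2norm (X z) + l2norm (Y z)"
        using coord_le_norm[OF bounded_l2[OF X zl]] coord_le_norm[OF bounded_l2[OF Y zl]] by (rule add_mono)
      also have "\<dots> \<le> CX * l2norm z + CY * l2norm z" using CX(2)[OF zl] CY(2)[OF zl] by (rule add_mono)
      also have "\<dots> \<le> CX * sqrt \<epsilon> + CY * sqrt \<epsilon>" using nz CX(1) CY(1) by (intro add_mono mult_left_mono)
      finally have "cmod (X z k - Y z k) \<le> (CX + CY) * sqrt \<epsilon>" by (simp add: algebra_simps)
      then show ?thesis by (simp only: diff)
    qed
    show ?thesis
    proof
      fix k
      show "X x k = Y x k"
      proof (rule ccontr)
        assume "X x k \<noteq> Y x k"
        then have d: "cmod (X x k - Y x k) > 0" by simp
        define \<epsilon> where "\<epsilon> = (cmod (X x k - Y x k) / (CX + CY + 1))\<^sup>2"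
        have ep: "\<epsilon> > 0" using d CX(1) CY(1) by (simp add: \<epsilon>_def)
        have sq: "sqrt \<epsilon> = cmod (X x k - Y x k) / (CX + CY + 1)"
          using d CX(1) CY(1) by (simp add: \<epsilon>_def)
        have e1: "sqrt \<epsilon> * (CX + CY + 1) = cmod (X x k - Y x k)"
          unfolding sq using CX(1) CY(1) by simp
        then have e2: "sqrt \<epsilon> * CX + sqrt \<epsilon> * CY + sqrt \<epsilon> = cmod (X x k - Y x k)"
          by (simp add: algebra_simps)
        have sp: "sqrt \<epsilon> > 0" using ep by simp
        have e3: "(CX + CY) * sqrt \<epsilon> = sqrt \<epsilon> * CX + sqrt \<epsilon> * CY" by (simp add: algebra_simps)
        have "(CX + CY) * sqrt \<epsilon> < cmod (X x k - Y x k)"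
          using e2 e3 sp by linarith
        then show False using key[OF ep, of k] by simp
      qed
    qed
  qed
qed


type_synonym 'i mat = "'i \<Rightarrow> 'i \<Rightarrow> complex"

definition bf :: "'i mat \<Rightarrow> 'i set \<Rightarrow> 'i vec \<Rightarrow> 'i vec \<Rightarrow> complex" where
  "bf M G x y = (\<Sum>j\<in>G. \<Sum>k\<in>G. cnj (x j) * M j k * y k)"

definition psd :: "'i mat \<Rightarrow> bool" where
  "psd M \<longleftrightarrow> (\<forall>F x. finite F \<longrightarrow> Im (bf M F x x) = 0 \<and> 0 \<le> Re (bf M F x x))"

lemma psdD: "psd M \<Longrightarrow> finite F \<Longrightarrow> Im (bf M F x x) = 0 \<and> 0 \<le> Re (bf M F x x)"
  unfolding psd_def by blast

lemma psd_diag: assumes "psd M" shows "Im (M j j) = 0 \<and> 0 \<le> Re (M j j)"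
  using psdD[OF assms, of "{j}" "\<lambda>_. 1"] by (simp add: bf_def)

lemma psd_diag_real: assumes "psd M" shows "M j j = of_real (Re (M j j))"
  using psd_diag[OF assms, of j] by (simp add: complex_eq_iff)

lemma psd_herm: assumes "psd M" shows "M j k = cnj (M k j)"
proof (cases "j = k")
  case True then show ?thesis using psd_diag[OF assms, of j] by (simp add: complex_eq_iff)
next
  case False
  have fin: "finite {j, k}" by simp
  have 1: "Im (bf M {j, k} (\<lambda>_. 1) (\<lambda>_. 1)) = 0" by (rule conjunct1[OF psdD[OF assms fin]])
  have 2: "Im (bf M {j, k} (\<lambda>i. if i = k then \<i> else 1) (\<lambda>i. if i = k then \<i> else 1)) = 0"
    by (rule conjunct1[OF psdD[OF assms fin]])
  have dj: "Im (M j j) = 0" and dk: "Im (M k k) = 0" using psd_diag[OF assms] by auto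
  from 1 have a: "Im (M j k) + Im (M k j) = 0" using False dj dk by (simp add: bf_def)
  from 2 have b: "Re (M j k) - Re (M k j) = 0" using False dj dk by (simp add: bf_def algebra_simps)
  show ?thesis using a b by (simp add: complex_eq_iff)
qed

lemma psd_row0: assumes M: "psd M" and z: "M j j = 0" shows "M j k = 0"
proof (rule ccontr)
  assume nz: "M j k \<noteq> 0"
  then have jk: "j \<noteq> k" using z by auto
  define a where "a = M j k"
  have ha: "M k j = cnj a" unfolding a_def using psd_herm[OF M, of k j] .
  define s :: real where "s = (Re (M k k) + 1) / (2 * (cmod a)\<^sup>2)"
  have ap: "(cmod a)\<^sup>2 > 0" using nz by (simp add: a_def)
  define t where "t = - of_real s * a"
  have fin: "finite {j, k}" by simp
  have h0: "0 \<le> Re (bf M {j, k} (\<lambda>i. if i = j then t else 1) (\<lambda>i. if i = j then t else 1))"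
    by (rule conjunct2[OF psdD[OF M fin]])
  have q: "bf M {j, k} (\<lambda>i. if i = j then t else 1) (\<lambda>i. if i = j then t else 1)
      = cnj t * a + cnj a * t + M k k"
    using jk z ha by (simp add: bf_def a_def[symmetric])
  have h1: "cnj t * a + cnj a * t = - of_real (2 * s) * (cnj a * a)"
    by (simp add: t_def algebra_simps)
  have h2: "cnj a * a = of_real ((cmod a)\<^sup>2)" using cnj_mult_self[of a] by (simp add: mult.commute)
  have "0 \<le> - (2 * s * (cmod a)\<^sup>2) + Re (M k k)" using h0 unfolding q h1 h2 by simp
  moreover have "2 * s * (cmod a)\<^sup>2 = Re (M k k) + 1" using ap by (simp add: s_def)
  ultimately show False by simp
qed

lemma bf_extend:
  assumes "finite G" "F \<subseteq> G"
  shows "bf N F x x = bf N G (\<lambda>j. if j \<in> F then x j else 0) (\<lambda>j. if j \<in> F then x j else 0)"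
proof -
  let ?x = "\<lambda>j. if j \<in> F then x j else 0"
  have "bf N G ?x ?x = (\<Sum>j\<in>F. \<Sum>k\<in>G. cnj (?x j) * N j k * ?x k)"
    unfolding bf_def using assms by (intro sum.mono_neutral_right) auto
  also have "\<dots> = (\<Sum>j\<in>F. \<Sum>k\<in>F. cnj (?x j) * N j k * ?x k)"
    using assms by (intro sum.cong[OF refl] sum.mono_neutral_right) auto
  also have "\<dots> = bf N F x x" unfolding bf_def by (intro sum.cong) auto
  finally show ?thesis by simp
qed

lemma bf_expand:
  "bf M G (\<lambda>j. x j - c * d j) (\<lambda>j. x j - c * d j)
     = bf M G x x - c * bf M G x d - cnj c * bf M G d x + cnj c * c * bf M G d d"
proof -
  have "\<And>j k. cnj (x j - c * d j) * M j k * (x k - c * d k)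
      = cnj (x j) * M j k * x k - c * (cnj (x j) * M j k * d k) - cnj c * (cnj (d j) * M j k * x k)
        + cnj c * c * (cnj (d j) * M j k * d k)"
    by (simp add: algebra_simps)
  then show ?thesis unfolding bf_def
    by (simp add: sum.distrib sum_subtractf sum_distrib_left)
qed

lemma sum_delta_r: "finite G \<Longrightarrow> p \<in> G \<Longrightarrow> (\<Sum>k\<in>G. f k * (if k = p then 1 else 0)) = (f p :: complex)"
proof -
  assume "finite G" "p \<in> G"
  have "(\<Sum>k\<in>G. f k * (if k = p then 1 else 0)) = (\<Sum>k\<in>G. if k = p then f k else 0)"
    by (intro sum.cong) auto
  also have "\<dots> = f p" using \<open>finite G\<close> \<open>p \<in> G\<close> by (simp add: sum.delta')
  finally show ?thesis .
qed

lemma sum_delta_l: "finite G \<Longrightarrow> p \<in> G \<Longrightarrow> (\<Sum>k\<in>G. cnj (if k = p then 1 else 0) * f k) = (f p :: complex)"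
proof -
  assume "finite G" "p \<in> G"
  have "(\<Sum>k\<in>G. cnj (if k = p then 1 else 0) * f k) = (\<Sum>k\<in>G. if k = p then f k else 0)"
    by (intro sum.cong) auto
  also have "\<dots> = f p" using \<open>finite G\<close> \<open>p \<in> G\<close> by (simp add: sum.delta')
  finally show ?thesis .
qed

lemma schur:
  assumes M: "psd M" and pp: "0 < Re (M p p)"
  defines "v \<equiv> (\<lambda>j. M j p / of_real (sqrt (Re (M p p))))"
  shows "psd (\<lambda>j k. M j k - v j * cnj (v k))"
  unfolding psd_def
proof (intro allI impI)
  fix F :: "'a set" and x :: "'a vec" assume F: "finite F"
  define G where "G = insert p F"
  have G: "finite G" "F \<subseteq> G" "p \<in> G" using F by (auto simp: G_def)
  define y where "y = (\<lambda>j. if j \<in> F then x j else 0)"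
  define r where "r = Re (M p p)"
  define s where "s = sqrt r"
  have rp: "r > 0" using pp by (simp add: r_def)
  have sp: "s > 0" using rp by (simp add: s_def)
  have ss: "s * s = r" using rp by (simp add: s_def)
  have Mpp: "M p p = of_real r" unfolding r_def by (rule psd_diag_real[OF M])
  have vdef: "v j = M j p / of_real s" for j by (simp add: v_def r_def s_def)
  define b where "b = (\<Sum>k\<in>G. M p k * y k)"
  define c where "c = b / of_real r"
  define d :: "'a vec" where "d = (\<lambda>j. if j = p then 1 else 0)"
  define y' where "y' = (\<lambda>j. y j - c * d j)"
  have b1: "bf M G y d = cnj b"
  proof -
    have "bf M G y d = (\<Sum>j\<in>G. cnj (y j) * M j p)"
      unfolding bf_def d_def using sum_delta_r[OF G(1,3)] by simp
    also have "\<dots> = (\<Sum>j\<in>G. cnj (M p j * y j))"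
      by (intro sum.cong refl) (simp add: psd_herm[OF M, of _ p] mult.commute)
    finally show ?thesis by (simp add: b_def)
  qed
  have b2: "bf M G d y = b"
  proof -
    have "bf M G d y = (\<Sum>j\<in>G. cnj (d j) * (\<Sum>k\<in>G. M j k * y k))"
      unfolding bf_def by (simp add: sum_distrib_left mult.assoc)
    also have "\<dots> = b" unfolding d_def b_def by (rule sum_delta_l[OF G(1,3)])
    finally show ?thesis .
  qed
  have b3: "bf M G d d = of_real r"
  proof -
    have "bf M G d d = (\<Sum>j\<in>G. cnj (d j) * (\<Sum>k\<in>G. M j k * d k))"
      unfolding bf_def by (simp add: sum_distrib_left mult.assoc)
    also have "\<dots> = (\<Sum>j\<in>G. cnj (d j) * M j p)"
      unfolding d_def using sum_delta_r[OF G(1,3)] by simp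
    also have "\<dots> = M p p" unfolding d_def by (rule sum_delta_l[OF G(1,3)])
    finally show ?thesis using Mpp by simp
  qed
  have q1: "bf M G y' y' = bf M G y y - cnj b * b / of_real r"
  proof -
    have "bf M G y' y' = bf M G y y - c * cnj b - cnj c * b + cnj c * c * of_real r"
      unfolding y'_def bf_expand b1 b2 b3 ..
    also have "c * cnj b = cnj b * b / of_real r" by (simp add: c_def)
    also have "cnj c * b = cnj b * b / of_real r" by (simp add: c_def)
    also have "cnj c * c * of_real r = cnj b * b / of_real r" using rp by (simp add: c_def field_simps)
    finally show ?thesis by simp
  qed
  have vv: "bf (\<lambda>j k. v j * cnj (v k)) G y y = cnj b * b / of_real r"
  proof -
    have "bf (\<lambda>j k. v j * cnj (v k)) G y y = (\<Sum>j\<in>G. cnj (y j) * v j) * (\<Sum>k\<in>G. cnj (v k) * y k)"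
      unfolding bf_def by (simp add: sum_product algebra_simps)
    also have "(\<Sum>k\<in>G. cnj (v k) * y k) = b / of_real s"
      unfolding b_def vdef by (simp add: sum_divide_distrib psd_herm[OF M, of p] algebra_simps)
    also have "(\<Sum>j\<in>G. cnj (y j) * v j) = cnj (b / of_real s)"
      unfolding b_def vdef by (simp add: sum_divide_distrib psd_herm[OF M, of _ p] algebra_simps)
    finally show ?thesis using ss sp by (simp add: field_simps flip: of_real_mult)
  qed
  have diffbf: "bf (\<lambda>j k. M j k - v j * cnj (v k)) G y y = bf M G y y - bf (\<lambda>j k. v j * cnj (v k)) G y y"
    unfolding bf_def by (simp add: algebra_simps sum_subtractf)
  have eq: "bf (\<lambda>j k. M j k - v j * cnj (v k)) F x x = bf M G y' y'"
    unfolding bf_extend[OF G(1,2), of "\<lambda>j k. M j k - v j * cnj (v k)"] y_def[symmetric] diffbf vv q1 ..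
  show "Im (bf (\<lambda>j k. M j k - v j * cnj (v k)) F x x) = 0 \<and> 0 \<le> Re (bf (\<lambda>j k. M j k - v j * cnj (v k)) F x x)"
    unfolding eq using psdD[OF M G(1)] by blast
qed


definition cv :: "'i mat \<Rightarrow> 'i \<Rightarrow> 'i vec" where
  "cv M p = (\<lambda>j. if 0 < Re (M p p) then M j p / of_real (sqrt (Re (M p p))) else 0)"

primrec chol :: "'i mat \<Rightarrow> (nat \<Rightarrow> 'i) \<Rightarrow> nat \<Rightarrow> 'i mat" where
  "chol M piv 0 = M"
| "chol M piv (Suc n) = (\<lambda>j k. chol M piv n j k - cv (chol M piv n) (piv n) j * cnj (cv (chol M piv n) (piv n) k))"

definition vv :: "'i mat \<Rightarrow> (nat \<Rightarrow> 'i) \<Rightarrow> nat \<Rightarrow> 'i vec" where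
  "vv M piv n = cv (chol M piv n) (piv n)"

lemma chol_psd: assumes "psd M" shows "psd (chol M piv n)"
proof (induction n)
  case 0 then show ?case using assms by simp
next
  case (Suc n)
  let ?R = "chol M piv n" and ?p = "piv n"
  show ?case
  proof (cases "0 < Re (?R ?p ?p)")
    case True
    then show ?thesis using schur[OF Suc True] by (simp add: cv_def)
  next
    case False
    then show ?thesis using Suc by (simp add: cv_def)
  qed
qed

lemma chol_decomp: "M j k = chol M piv n j k + (\<Sum>m<n. vv M piv m j * cnj (vv M piv m k))"
  by (induction n) (simp_all add: vv_def)

lemma chol_zero_row:
  assumes M: "psd M" and "m < n"
  shows "chol M piv n (piv m) k = 0"
  using assms(2)
proof (induction n arbitrary: k)
  case 0 then show ?case by simp
next
  case (Suc n)
  let ?R = "chol M piv n" and ?p = "piv n"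
  have R: "psd ?R" by (rule chol_psd[OF M])
  show ?case
  proof (cases "m < n")
    case True
    have "?R (piv m) k = 0" "?R (piv m) ?p = 0" using Suc.IH[OF True] by auto
    then show ?thesis by (simp add: cv_def)
  next
    case False
    then have mn: "m = n" using Suc.prems by simp
    show ?thesis
    proof (cases "0 < Re (?R ?p ?p)")
      case True
      define r where "r = Re (?R ?p ?p)"
      have rp: "r > 0" using True by (simp add: r_def)
      have Rpp: "?R ?p ?p = of_real r" unfolding r_def by (rule psd_diag_real[OF R])
      have h: "cnj (?R k ?p) = ?R ?p k" using psd_herm[OF R, of ?p k] by simp
      have s2: "of_real (sqrt r) * of_real (sqrt r) = (of_real r :: complex)"
        using rp by (simp flip: of_real_mult)
      have "cv ?R ?p ?p * cnj (cv ?R ?p k) = ?R ?p ?p * cnj (?R k ?p) / (of_real (sqrt r) * of_real (sqrt r))"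
        using True by (simp add: cv_def r_def[symmetric])
      then have "cv ?R ?p ?p * cnj (cv ?R ?p k) = ?R ?p k"
        unfolding s2 h using rp by (simp add: Rpp)
      then show ?thesis using mn by simp
    next
      case False
      have "Im (?R ?p ?p) = 0 \<and> 0 \<le> Re (?R ?p ?p)" by (rule psd_diag[OF R])
      then have "?R ?p ?p = 0" using False by (simp add: complex_eq_iff)
      then have "?R ?p k = 0" by (rule psd_row0[OF R])
      then show ?thesis using mn False by (simp add: cv_def)
    qed
  qed
qed

lemma chol_diag_bound:
  assumes M: "psd M"
  shows "(\<Sum>m<n. (cmod (vv M piv m j))\<^sup>2) \<le> Re (M j j)"
proof -
  have "M j j = chol M piv n j j + (\<Sum>m<n. vv M piv m j * cnj (vv M piv m j))" by (rule chol_decomp)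
  then have "Re (M j j) = Re (chol M piv n j j) + (\<Sum>m<n. (cmod (vv M piv m j))\<^sup>2)"
    by (simp add: cnj_mult_self Re_sum)
  moreover have "0 \<le> Re (chol M piv n j j)" using psd_diag[OF chol_psd[OF M]] by blast
  ultimately show ?thesis by simp
qed

theorem cholesky:
  fixes M :: "'i mat" and piv :: "nat \<Rightarrow> 'i"
  assumes M: "psd M" and cov: "{j. M j j \<noteq> 0} \<subseteq> range piv"
  shows "\<exists>v :: nat \<Rightarrow> 'i vec. (\<forall>j. \<exists>N. (\<forall>m\<ge>N. v m j = 0) \<and> (\<forall>k. M j k = (\<Sum>m<N. v m j * cnj (v m k))))
           \<and> (\<forall>j n. (\<Sum>m<n. (cmod (v m j))\<^sup>2) \<le> Re (M j j))"
proof (intro exI[of _ "vv M piv"] conjI allI)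
  fix j n show "(\<Sum>m<n. (cmod (vv M piv m j))\<^sup>2) \<le> Re (M j j)" by (rule chol_diag_bound[OF M])
next
  fix j
  show "\<exists>N. (\<forall>m\<ge>N. vv M piv m j = 0) \<and> (\<forall>k. M j k = (\<Sum>m<N. vv M piv m j * cnj (vv M piv m k)))"
  proof (cases "M j j = 0")
    case True
    have z: "vv M piv m j = 0" for m
    proof -
      have "(\<Sum>m'<Suc m. (cmod (vv M piv m' j))\<^sup>2) \<le> 0"
        using chol_diag_bound[OF M, where n="Suc m" and piv=piv and j=j] True by simp
      moreover have "(cmod (vv M piv m j))\<^sup>2 \<le> (\<Sum>m'<Suc m. (cmod (vv M piv m' j))\<^sup>2)"
        by (rule member_le_sum) auto
      ultimately have "(cmod (vv M piv m j))\<^sup>2 \<le> 0" by linarith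
      then show ?thesis by simp
    qed
    show ?thesis using z psd_row0[OF M True] by (intro exI[of _ 0]) auto
  next
    case False
    then obtain m1 where m1: "j = piv m1" using cov by auto
    have row: "chol M piv m j k = 0" if "m > m1" for m k
      unfolding m1 by (rule chol_zero_row[OF M that])
    have z: "vv M piv m j = 0" if "m \<ge> Suc m1" for m
      using row[of m] that by (simp add: vv_def cv_def)
    show ?thesis
    proof (intro exI[of _ "Suc m1"] conjI allI impI)
      fix m assume "Suc m1 \<le> m" then show "vv M piv m j = 0" by (rule z)
    next
      fix k show "M j k = (\<Sum>m<Suc m1. vv M piv m j * cnj (vv M piv m k))"
        using chol_decomp[of M j k piv "Suc m1"] row[of "Suc m1" k] by simp
    qed
  qed
qed


lemma has_sum_finsum:
  fixes f :: "'a \<Rightarrow> 'b \<Rightarrow> 'c::topological_comm_monoid_add"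
  assumes "finite I" "\<And>i. i \<in> I \<Longrightarrow> (f i has_sum s i) A"
  shows "((\<lambda>x. \<Sum>i\<in>I. f i x) has_sum (\<Sum>i\<in>I. s i)) A"
  using assms
proof (induction I rule: finite_induct)
  case empty then show ?case by simp
next
  case (insert a I)
  then show ?case by (simp add: has_sum_add)
qed

lemma pos_psd:
  assumes T: "positive_op T"
  shows "psd (\<lambda>j k. T (e k) j)"
  unfolding psd_def
proof (intro allI impI)
  fix F :: "'a set" and x :: "'a vec" assume F: "finite F"
  have bT: "bounded_op T" by (rule positive_bounded[OF T])
  define xF where "xF = (\<lambda>i. if i \<in> F then x i else 0)"
  have xS: "\<And>i. i \<notin> F \<Longrightarrow> xF i = 0" by (simp add: xF_def)
  have xl: "xF \<in> l2" by (rule finsupp_l2[OF F xS])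
  have Tx: "T xF = (\<lambda>i. \<Sum>k\<in>F. xF k * T (e k) i)"
    using bounded_fin[OF bT F, of e xF] finsupp_expand[OF F xS] by simp
  have "l2inner xF (T xF) = (\<Sum>j\<in>F. cnj (xF j) * T xF j)" by (rule inner_finsupp[OF F xS])
  also have "\<dots> = bf (\<lambda>j k. T (e k) j) F x x"
    unfolding Tx bf_def by (intro sum.cong refl) (simp add: xF_def sum_distrib_left algebra_simps)
  finally show "Im (bf (\<lambda>j k. T (e k) j) F x x) = 0 \<and> 0 \<le> Re (bf (\<lambda>j k. T (e k) j) F x x)"
    using positive_inner[OF T xl] by simp
qed

lemma trace_effect:
  fixes \<alpha> a :: "'i op"
  assumes st: "state \<alpha>" and ea: "effect a"
  shows "\<exists>r. trace_op (\<alpha> \<circ> a) = of_real r \<and> 0 \<le> r \<and> r \<le> 1"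
proof -
  have pa: "positive_op \<alpha>" using st unfolding state_def effect_def by blast
  have ba: "bounded_op \<alpha>" by (rule positive_bounded[OF pa])
  have pA: "positive_op a" by (rule effect_pos[OF ea])
  have bA: "bounded_op a" by (rule effect_bounded[OF ea])
  define R where "R = (\<lambda>j k. \<alpha> (e k) j)"
  have R: "psd R" unfolding R_def by (rule pos_psd[OF pa])
  have dsum: "(\<lambda>j. R j j) summable_on UNIV" using st unfolding state_def R_def by simp
  have dtr: "(\<Sum>\<^sub>\<infinity>j. R j j) = 1" using st unfolding state_def R_def trace_op_def by simp
  define d where "d = (\<lambda>j. Re (R j j))"
  have dnn: "0 \<le> d j" for j using psd_diag[OF R] by (simp add: d_def)
  have ds: "d summable_on UNIV" unfolding d_def using summable_on_Re[OF dsum] .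
  have d1: "(\<Sum>\<^sub>\<infinity>j. d j) = 1" unfolding d_def using infsum_Re[OF dsum] dtr by simp
  have "countable {j. R j j \<noteq> 0}" using summable_countable_complex[OF dsum] by simp
  then obtain piv :: "nat \<Rightarrow> 'i" where cov: "{j. R j j \<noteq> 0} \<subseteq> range piv"
    using subset_range_from_nat_into by blast
  obtain v :: "nat \<Rightarrow> 'i vec" where
    vN: "\<And>j. \<exists>N. (\<forall>m\<ge>N. v m j = 0) \<and> (\<forall>k. R j k = (\<Sum>m<N. v m j * cnj (v m k)))" and
    vb: "\<And>j n. (\<Sum>m<n. (cmod (v m j))\<^sup>2) \<le> Re (R j j)"
    using cholesky[OF R cov] by blast
  obtain N where N: "\<And>j m. m \<ge> N j \<Longrightarrow> v m j = 0" "\<And>j k. R j k = (\<Sum>m<N j. v m j * cnj (v m k))"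
    using vN by metis
  have vd: "(cmod (v m j))\<^sup>2 \<le> d j" for m j
  proof -
    have "(cmod (v m j))\<^sup>2 \<le> (\<Sum>m'<Suc m. (cmod (v m' j))\<^sup>2)" by (rule member_le_sum) auto
    then show ?thesis using vb[of j "Suc m"] by (simp add: d_def)
  qed
  have vl: "v m \<in> l2" for m
    unfolding l2_iff by (rule summable_on_comparison_test[OF ds]) (use vd in auto)
  define nv where "nv = (\<lambda>m. \<Sum>\<^sub>\<infinity>j. (cmod (v m j))\<^sup>2)"
  have nvn: "nv m = (l2norm (v m))\<^sup>2" for m by (simp add: nv_def l2norm_sq)
  have nvnn: "0 \<le> nv m" for m by (simp add: nvn)
  have finnv: "(\<Sum>m\<in>F. nv m) \<le> 1" if F: "finite F" for F
  proof -
    have hs: "((\<lambda>j. \<Sum>m\<in>F. (cmod (v m j))\<^sup>2) has_sum (\<Sum>m\<in>F. nv m)) UNIV"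
      by (rule has_sum_finsum[OF F]) (use vl in \<open>auto simp: nv_def l2_iff intro: has_sum_infsum\<close>)
    have "(\<Sum>m\<in>F. nv m) = (\<Sum>\<^sub>\<infinity>j. \<Sum>m\<in>F. (cmod (v m j))\<^sup>2)"
      using hs by (simp add: infsumI)
    also have "\<dots> \<le> (\<Sum>\<^sub>\<infinity>j. d j)"
    proof (rule infsum_mono)
      show "(\<lambda>j. \<Sum>m\<in>F. (cmod (v m j))\<^sup>2) summable_on UNIV"
        using hs by (rule has_sum_imp_summable)
      show "d summable_on UNIV" by (rule ds)
      fix j
      have "(\<Sum>m\<in>F. (cmod (v m j))\<^sup>2) \<le> (\<Sum>m<Suc (Max (insert 0 F)). (cmod (v m j))\<^sup>2)"
        by (rule sum_mono2) (use F in \<open>auto simp: less_Suc_eq_le\<close>)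
      also have "\<dots> \<le> d j" unfolding d_def by (rule vb)
      finally show "(\<Sum>m\<in>F. (cmod (v m j))\<^sup>2) \<le> d j" .
    qed
    finally show ?thesis using d1 by simp
  qed
  have nvs: "nv summable_on UNIV"
    by (rule nonneg_bdd_above_summable_on) (use nvnn finnv in \<open>auto intro!: bdd_aboveI[of _ 1]\<close>)
  have nv1: "(\<Sum>\<^sub>\<infinity>m. nv m) \<le> 1"
    by (rule infsum_le_finite_sums[OF nvs]) (use finnv in auto)
  obtain C where C: "C \<ge> 0" "\<And>x. x \<in> l2 \<Longrightarrow> l2norm (a x) \<le> C * l2norm x"
    using bounded_bound[OF bA] by blast
  have avl: "a (v m) \<in> l2" for m by (rule bounded_l2[OF bA vl])
  define na where "na = (\<lambda>m. \<Sum>\<^sub>\<infinity>j. (cmod (a (v m) j))\<^sup>2)"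
  have nan: "na m = (l2norm (a (v m)))\<^sup>2" for m by (simp add: na_def l2norm_sq)
  have nale: "na m \<le> C\<^sup>2 * nv m" for m
  proof -
    have "l2norm (a (v m)) \<le> C * l2norm (v m)" by (rule C(2)[OF vl])
    then have "(l2norm (a (v m)))\<^sup>2 \<le> (C * l2norm (v m))\<^sup>2" by (simp add: power_mono)
    then show ?thesis by (simp add: nan nvn power_mult_distrib)
  qed
  define hh where "hh = (\<lambda>m j. v m j * cnj (a (v m) j))"
  define kk where "kk = (\<lambda>m j. ((cmod (v m j))\<^sup>2 + (cmod (a (v m) j))\<^sup>2) / 2)"
  have hk: "norm (hh m j) \<le> kk m j" for m j
  proof -
    have "0 \<le> (cmod (v m j) - cmod (a (v m) j))\<^sup>2" by simp
    then have "2 * (cmod (v m j) * cmod (a (v m) j)) \<le> (cmod (v m j))\<^sup>2 + (cmod (a (v m) j))\<^sup>2"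
      by (simp add: power2_eq_square algebra_simps)
    then show ?thesis by (simp add: hh_def kk_def norm_mult)
  qed
  have kks: "(\<lambda>(m, j). kk m j) summable_on UNIV \<times> UNIV"
  proof (rule summable_on_SigmaI[where g = "\<lambda>m. (nv m + na m) / 2"])
    fix m :: nat
    have "((\<lambda>j. (cmod (v m j))\<^sup>2 + (cmod (a (v m) j))\<^sup>2) has_sum (nv m + na m)) UNIV"
      unfolding nv_def na_def using vl avl unfolding l2_iff by (intro has_sum_add has_sum_infsum)
    then show "((\<lambda>j. case (m, j) of (m, j) \<Rightarrow> kk m j) has_sum (nv m + na m) / 2) UNIV"
      unfolding kk_def by (simp add: has_sum_divide_const)
  next
    show "(\<lambda>m. (nv m + na m) / 2) summable_on UNIV"
    proof (rule summable_on_comparison_test)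
      show "(\<lambda>m. ((1 + C\<^sup>2) / 2) * nv m) summable_on UNIV" using nvs by (rule summable_on_cmult_right)
      fix m :: nat
      show "(nv m + na m) / 2 \<le> (1 + C\<^sup>2) / 2 * nv m" using nale[of m] by (simp add: algebra_simps)
      show "0 \<le> (nv m + na m) / 2" using nvnn[of m] by (simp add: nan)
    qed
  next
    fix m :: nat and j :: 'i show "0 \<le> (case (m, j) of (m, j) \<Rightarrow> kk m j)" by (simp add: kk_def)
  qed
  have hhs: "(\<lambda>(m, j). hh m j) summable_on UNIV \<times> UNIV"
  proof -
    have "(\<lambda>p. norm ((\<lambda>(m, j). hh m j) p)) summable_on UNIV \<times> UNIV"
      by (rule Infinite_Sum.abs_summable_on_comparison_test'[OF kks]) (use hk in auto)
    then show ?thesis using summable_on_iff_abs_summable_on_complex by blast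
  qed
  have key: "((\<lambda>m. hh m j) has_sum \<alpha> (a (e j)) j) UNIV" for j
  proof -
    define y where "y = a (e j)"
    have yl: "y \<in> l2" unfolding y_def by (rule bounded_l2[OF bA basis_l2])
    have "\<alpha> y j = l2inner (e j) (\<alpha> y)" by simp
    also have "\<dots> = l2inner (\<alpha> (e j)) y" by (rule pos_selfadj[OF pa basis_l2 yl])
    also have "\<dots> = (\<Sum>\<^sub>\<infinity>k. (\<Sum>m<N j. v m j * (cnj (v m k) * y k)))"
      unfolding l2inner_def
    proof (intro infsum_cong)
      fix k
      have "cnj (\<alpha> (e j) k) = R j k" using psd_herm[OF R, of j k] by (simp add: R_def)
      then show "cnj (\<alpha> (e j) k) * y k = (\<Sum>m<N j. v m j * (cnj (v m k) * y k))"
        unfolding N(2)[of j k] by (simp add: sum_distrib_left sum_distrib_right algebra_simps)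
    qed
    also have "\<dots> = (\<Sum>m<N j. v m j * l2inner (v m) y)"
    proof (rule infsumI, rule has_sum_finsum)
      fix m
      show "((\<lambda>k. v m j * (cnj (v m k) * y k)) has_sum v m j * l2inner (v m) y) UNIV"
        unfolding l2inner_def by (intro has_sum_cmult_right has_sum_infsum inner_summable[OF vl yl])
    qed simp
    also have "\<dots> = (\<Sum>m<N j. hh m j)"
    proof (intro sum.cong refl)
      fix m
      have "l2inner (v m) y = l2inner (a (v m)) (e j)" unfolding y_def by (rule pos_selfadj[OF pA vl basis_l2])
      then show "v m j * l2inner (v m) y = hh m j" by (simp add: hh_def)
    qed
    finally have eq: "\<alpha> (a (e j)) j = (\<Sum>m<N j. hh m j)" unfolding y_def .
    show ?thesis unfolding eq
      by (rule has_sum_finite_neutralI[where B = "{..<N j}"]) (auto simp: hh_def N(1))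
  qed
  define rr where "rr = (\<lambda>m. Re (l2inner (v m) (a (v m))))"
  have rr0: "0 \<le> rr m" for m using positive_inner[OF pA vl] by (simp add: rr_def)
  have rrle: "rr m \<le> nv m" for m using effect_le[OF ea vl] by (simp add: rr_def nvn)
  have inner_m: "(\<Sum>\<^sub>\<infinity>j. hh m j) = of_real (rr m)" for m
  proof -
    have im: "Im (l2inner (v m) (a (v m))) = 0" using positive_inner[OF pA vl] by simp
    have "(\<Sum>\<^sub>\<infinity>j. hh m j) = (\<Sum>\<^sub>\<infinity>j. cnj (cnj (v m j) * a (v m) j))"
      unfolding hh_def by (simp add: mult.commute)
    also have "\<dots> = cnj (l2inner (v m) (a (v m)))" unfolding l2inner_def by (rule infsum_cnj)
    also have "\<dots> = of_real (rr m)" using im by (simp add: rr_def complex_eq_iff)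
    finally show ?thesis .
  qed
  have "trace_op (\<alpha> \<circ> a) = (\<Sum>\<^sub>\<infinity>j. \<alpha> (a (e j)) j)" by (simp add: trace_op_def)
  also have "\<dots> = (\<Sum>\<^sub>\<infinity>j. \<Sum>\<^sub>\<infinity>m. hh m j)"
  proof (rule infsum_cong)
    fix j show "\<alpha> (a (e j)) j = (\<Sum>\<^sub>\<infinity>m. hh m j)" using infsumI[OF key[of j]] by simp
  qed
  also have "\<dots> = (\<Sum>\<^sub>\<infinity>m. \<Sum>\<^sub>\<infinity>j. hh m j)" using infsum_swap_banach[OF hhs] by simp
  also have "\<dots> = (\<Sum>\<^sub>\<infinity>m. of_real (rr m))" using inner_m by simp
  also have "\<dots> = of_real (\<Sum>\<^sub>\<infinity>m. rr m)" by (rule infsum_of_real_c)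
  finally have tr: "trace_op (\<alpha> \<circ> a) = of_real (\<Sum>\<^sub>\<infinity>m. rr m)" .
  have rrs: "rr summable_on UNIV" by (rule summable_on_comparison_test[OF nvs]) (use rrle rr0 in auto)
  have "0 \<le> (\<Sum>\<^sub>\<infinity>m. rr m)" by (rule infsum_nonneg) (use rr0 in auto)
  moreover have "(\<Sum>\<^sub>\<infinity>m. rr m) \<le> (\<Sum>\<^sub>\<infinity>m. nv m)" by (rule infsum_mono[OF rrs nvs rrle])
  ultimately show ?thesis using tr nv1 by (intro exI[of _ "\<Sum>\<^sub>\<infinity>m. rr m"]) auto
qed


lemma state_bounded: "state \<rho> \<Longrightarrow> bounded_op \<rho>"
  unfolding state_def effect_def positive_op_def by blast

lemma tr_smul:
  assumes \<rho>: "bounded_op \<rho>" and T: "bounded_op T"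
  shows "trace_op (\<rho> \<circ> (\<lambda>x i. c * T x i)) = c * trace_op (\<rho> \<circ> T)"
proof -
  have "\<And>j. \<rho> (\<lambda>i. c * T (e j) i) = (\<lambda>i. c * \<rho> (T (e j)) i)"
    by (rule bounded_scale[OF \<rho> bounded_l2[OF T basis_l2]])
  then show ?thesis unfolding trace_op_def by (simp add: infsum_cmult_right')
qed

lemma holevo_tr:
  "trace_op (holevo \<alpha> A \<Delta> \<rho> \<circ> a) = trace_op (\<rho> \<circ> A \<Delta>) * trace_op (\<alpha> \<circ> a)"
  unfolding trace_op_def holevo_def by (simp add: infsum_cmult_right')

lemma dual_holevo:
  assumes bA: "bounded_op (A \<Delta>)"
  shows "dual_inst (holevo \<alpha> A) \<Delta> a = (\<lambda>x i. trace_op (\<alpha> \<circ> a) * A \<Delta> x i)"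
  unfolding dual_inst_def
proof (rule the_equality)
  let ?X0 = "\<lambda>x i. trace_op (\<alpha> \<circ> a) * A \<Delta> x i"
  have b0: "bounded_op ?X0" by (rule smul_bounded[OF bA])
  have tr0: "trace_op (\<rho> \<circ> ?X0) = trace_op (holevo \<alpha> A \<Delta> \<rho> \<circ> a)" if "state \<rho>" for \<rho>
    unfolding tr_smul[OF state_bounded[OF that] bA] holevo_tr by simp
  show "bounded_op ?X0 \<and> (\<forall>\<rho>. state \<rho> \<longrightarrow> trace_op (\<rho> \<circ> ?X0) = trace_op (holevo \<alpha> A \<Delta> \<rho> \<circ> a))"
    using b0 tr0 by blast
  fix X assume X: "bounded_op X \<and> (\<forall>\<rho>. state \<rho> \<longrightarrow> trace_op (\<rho> \<circ> X) = trace_op (holevo \<alpha> A \<Delta> \<rho> \<circ> a))"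
  show "X = ?X0"
  proof (rule sep_ops)
    show "bounded_op X" using X by blast
    show "bounded_op ?X0" by (rule b0)
    fix \<rho> :: "'a op" assume "state \<rho>"
    then show "trace_op (\<rho> \<circ> X) = trace_op (\<rho> \<circ> ?X0)" using X tr0 by simp
  qed
qed

lemma subobs_bounded: "subobs M A \<Longrightarrow> bounded_op (A \<Delta>)"
  unfolding subobs_def using effect_bounded zero_op_bounded by metis

lemma subobs_smul:
  assumes A: "subobs M A" and r: "0 \<le> r" "r \<le> 1"
  shows "subobs M (\<lambda>\<Delta> x i. of_real r * A \<Delta> x i)"
  unfolding subobs_def
proof (intro conjI allI impI ballI)
  fix \<Delta> assume "\<Delta> \<notin> sets M"
  then have "A \<Delta> = zero_op" using A unfolding subobs_def by blast
  then show "(\<lambda>x i. of_real r * A \<Delta> x i) = zero_op" by (simp add: zero_op_def zero_vec_def)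
next
  fix \<Delta> assume "\<Delta> \<in> sets M"
  then have "effect (A \<Delta>)" using A unfolding subobs_def by blast
  then show "effect (\<lambda>x i. of_real r * A \<Delta> x i)" by (rule effect_smul[OF _ r])
next
  fix D :: "nat \<Rightarrow> 'a set" and x :: "'b vec"
  assume D: "range D \<subseteq> sets M" "disjoint_family D" and x: "x \<in> l2"
  have lim: "(\<lambda>N. l2norm (\<lambda>i. (\<Sum>n<N. A (D n) x i) - A (\<Union>n. D n) x i)) \<longlonglongrightarrow> 0"
    using A D x unfolding subobs_def by blast
  have eq: "l2norm (\<lambda>i. (\<Sum>n<N. of_real r * A (D n) x i) - of_real r * A (\<Union>n. D n) x i)
      = r * l2norm (\<lambda>i. (\<Sum>n<N. A (D n) x i) - A (\<Union>n. D n) x i)" for N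
  proof -
    have "(\<lambda>i. (\<Sum>n<N. of_real r * A (D n) x i) - of_real r * A (\<Union>n. D n) x i)
        = (\<lambda>i. of_real r * ((\<Sum>n<N. A (D n) x i) - A (\<Union>n. D n) x i))"
      by (simp add: sum_distrib_left right_diff_distrib)
    then show ?thesis using r by (simp add: l2norm_scale)
  qed
  show "(\<lambda>N. l2norm (\<lambda>i. (\<Sum>n<N. of_real r * A (D n) x i) - of_real r * A (\<Union>n. D n) x i)) \<longlonglongrightarrow> 0"
    unfolding eq using tendsto_mult_right_zero[OF lim, of r] by (simp add: mult.commute)
qed

theorem theorem3p3:
  fixes \<alpha> :: "'i op" and A :: "'w set \<Rightarrow> 'i op" and M :: "'w measure"
  assumes "state \<alpha>" and "observable M A"
  shows "sob_effect_algebra M (U_inst (holevo \<alpha> A))"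
proof -
  have st: "state \<alpha>" and sA: "subobs M A" and AO: "A (space M) = id_op"
    using assms unfolding observable_def by auto
  have bA: "bounded_op (A \<Delta>)" for \<Delta> by (rule subobs_bounded[OF sA])
  define t where "t = (\<lambda>a. trace_op (\<alpha> \<circ> a))"
  define sc where "sc = (\<lambda>(c::complex) \<Delta> x i. c * A \<Delta> x i)"
  have dh: "dual_inst (holevo \<alpha> A) \<Delta> a = (\<lambda>x i. trace_op (\<alpha> \<circ> a) * A \<Delta> x i)" for \<Delta> a
    by (rule dual_holevo[where A=A, OF bA])
  have U: "U_inst (holevo \<alpha> A) = {sc (t a) | a. effect a}"
    unfolding U_inst_def sc_def t_def dh by simp
  have trA: "trace_op \<alpha> = 1" using st unfolding state_def by blast
  have tid: "t id_op = 1"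
    using trA unfolding t_def trace_op_def by (simp add: id_op_def)
  have tsc: "t (\<lambda>x i. of_real r * id_op x i) = of_real r" for r
    unfolding t_def tr_smul[OF state_bounded[OF st] id_op_bounded] using tid by (simp add: t_def)
  have inU: "sc (of_real r) \<in> U_inst (holevo \<alpha> A)" if "0 \<le> r" "r \<le> 1" for r
    unfolding U using effect_scalar[OF that] tsc[of r] by (intro CollectI exI[of _ "\<lambda>x i. of_real r * id_op x i"]) auto
  have Uform: "\<exists>r. 0 \<le> r \<and> r \<le> 1 \<and> B = sc (of_real r)" if hB: "B \<in> U_inst (holevo \<alpha> A)" for B
  proof -
    obtain a where a: "effect a" "B = sc (t a)" using hB unfolding U by blast
    obtain r where "t a = of_real r" "0 \<le> r" "r \<le> 1" using trace_effect[OF st a(1)] unfolding t_def by blast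
    then show ?thesis using a by auto
  qed
  show ?thesis unfolding sob_effect_algebra_def
  proof (intro conjI)
    show "U_inst (holevo \<alpha> A) \<subseteq> {A'. subobs M A'}"
    proof
      fix B assume "B \<in> U_inst (holevo \<alpha> A)"
      then obtain r where "0 \<le> r" "r \<le> 1" "B = sc (of_real r)" using Uform by blast
      then show "B \<in> {A'. subobs M A'}" unfolding sc_def using subobs_smul[OF sA] by simp
    qed
  next
    have A1: "sc (of_real 1) = A" by (simp add: sc_def)
    show "\<exists>Z\<in>U_inst (holevo \<alpha> A). observable M Z \<and> (\<forall>B\<in>U_inst (holevo \<alpha> A). sob_diff Z B \<in> U_inst (holevo \<alpha> A))"
    proof (intro bexI[of _ A] conjI ballI)
      show "A \<in> U_inst (holevo \<alpha> A)" using inU[of 1] A1 by simp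
      show "observable M A" by (rule assms(2))
      fix B assume "B \<in> U_inst (holevo \<alpha> A)"
      then obtain r where r: "0 \<le> r" "r \<le> 1" "B = sc (of_real r)" using Uform by blast
      have "sob_diff A B = sc (of_real (1 - r))"
        unfolding r(3) sob_diff_def sc_def by (simp add: algebra_simps)
      then show "sob_diff A B \<in> U_inst (holevo \<alpha> A)" using inU[of "1 - r"] r by simp
    qed
  next
    show "\<forall>B1\<in>U_inst (holevo \<alpha> A). \<forall>B2\<in>U_inst (holevo \<alpha> A). subobs M (sob_add B1 B2) \<longrightarrow> sob_add B1 B2 \<in> U_inst (holevo \<alpha> A)"
    proof (intro ballI impI)
      fix B1 B2 assume "B1 \<in> U_inst (holevo \<alpha> A)" "B2 \<in> U_inst (holevo \<alpha> A)" and s: "subobs M (sob_add B1 B2)"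
      then obtain r1 r2 where r: "B1 = sc (of_real r1)" "B2 = sc (of_real r2)" using Uform by metis
      have sum: "sob_add B1 B2 = sc (of_real (r1 + r2))"
        unfolding r sob_add_def sc_def by (simp add: algebra_simps)
      have "effect (sob_add B1 B2 (space M))" using s unfolding subobs_def by simp
      then have "effect (\<lambda>(x::'i vec) i. of_real (r1 + r2) * id_op x i)" unfolding sum sc_def AO by simp
      from effect_scalar_inv[OF this] have "0 \<le> r1 + r2" "r1 + r2 \<le> 1" by auto
      then show "sob_add B1 B2 \<in> U_inst (holevo \<alpha> A)" unfolding sum by (rule inU)
    qed
  qed
qed


end
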